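(* Let $(X,d)$ be a compact metric space, $T:X\to X$ any map, and $I,J$ two computable interpretation functions on $X$ (not necessarily belonging to the same computable structure). Then $\mathcal E^I(x)=\mathcal E^J(x)$ for every $x\in X$.
   Context: $\Sigma=\{0,1\}^*$, $|s|$ the length of $s$; a universal Turing machine $\mathcal U$ is fixed and viewed as a partial recursive function $\Sigma\to\Sigma$. An interpretation function is $I:\Sigma\to X$ with dense image; it is computable if there is a total recursive $D:\Sigma\times\Sigma\times\mathbb N\to\mathbb Q$ with $|d(I(s_1),I(s_2))-D(s_1,s_2,n)|\le2^{-n}$; two computable interpretations are in the same computable structure if there is a total recursive $D^*$ with $|d(I_1(s_1),I_2(s_2))-D^*(s_1,s_2,n)|\le2^{-n}$. Fix a total recursive surjection $\mathcal Q:\Sigma\to\Sigma^*$ onto finite sequences of strings; $U(p)=I(\mathcal Q(\mathcal U(p)))\in X^*$ with $i$-th entry $U_i(p)$ (from $0$). $\mathcal E^I(x,n,\epsilon)=\min\{|p|: U(p)\in X^{n+1},\ \max_{0\le i\le n}d(U_i(p),T^i(x))<\epsilon\}$. Hyperreals: $\mathbb R^*$ an ordered field containing $\mathbb R$ with a surjective ring homomorphism $J:\mathbb R^{\mathbb N}\to\mathbb R^*$ such that if $a\in\mathbb R$ and $\exists k\ge1$ with $\phi_{kn}\ge a$ for all $n\ge1$ then $J(\phi)\ge a$; for nonzero $a,b$, $a\simeq b$ iff $a/b,b/a$ bounded; $[a]$ the class; $[a]\le[b]$ iff for all $x\in[a],y\in[b]$, $x\simeq y$ or $x<y$. $\mathcal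 R$ is the totally ordered set of $\approx$-classes of monotone sequences in $\mathbb R^*/{\simeq}$ ($(a_i)<(b_j)$ iff $\exists M$ with $a_n<b_m$ for all $n,m>M$; $\approx$ iff neither $<$), containing $\mathbb R^*/{\simeq}$ as constant sequences, with sups/infs of monotone sequences. $\mathcal E^I(x,\epsilon)=[J((\mathcal E^I(x,n,\epsilon))_n)]$, $\mathcal E^I(x)=\sup_{\epsilon>0}\mathcal E^I(x,\epsilon)\in\mathcal R$. *)

theory Defs
  imports "HOL-Analysis.Analysis" "HOL-Library.Nat_Bijection"
begin

datatype recf = Zr | Sc | Proj nat | Comp recf "recf list" | Prim recf recf | Mn recf

inductive reval :: "recf \<Rightarrow> nat list \<Rightarrow> nat \<Rightarrow> bool" where
  zero: "reval Zr xs 0"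
| succ: "reval Sc (x # xs) (Suc x)"
| proj: "i < length xs \<Longrightarrow> reval (Proj i) xs (xs ! i)"
| comp: "length ys = length gs \<Longrightarrow> (\<forall>i<length gs. reval (gs ! i) xs (ys ! i))
          \<Longrightarrow> reval f ys z \<Longrightarrow> reval (Comp f gs) xs z"
| prim0: "reval f xs y \<Longrightarrow> reval (Prim f g) (0 # xs) y"
| primS: "reval (Prim f g) (n # xs) y \<Longrightarrow> reval g (y # n # xs) z
          \<Longrightarrow> reval (Prim f g) (Suc n # xs) z"
| mn: "reval f (n # xs) 0 \<Longrightarrow> (\<forall>m<n. \<exists>y. reval f (m # xs) (Suc y))
          \<Longrightarrow> reval (Mn f) xs n"

text \<open>Bijective encoding of binary strings (Sigma = bool list) into nat.\<close>
fun bl_enc :: "bool list \<Rightarrow> nat" where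
  "bl_enc [] = 0"
| "bl_enc (b # s) = 2 * bl_enc s + (if b then 2 else 1)"

definition rat_enc :: "rat \<Rightarrow> nat" where
  "rat_enc q = prod_encode (int_encode (fst (quotient_of q)), nat (snd (quotient_of q)))"

definition partrec_bl :: "(bool list \<Rightarrow> bool list option) \<Rightarrow> bool" where
  "partrec_bl f \<longleftrightarrow> (\<exists>c. \<forall>s y. reval c [bl_enc s] y \<longleftrightarrow> map_option bl_enc (f s) = Some y)"

definition universal_machine :: "(bool list \<Rightarrow> bool list option) \<Rightarrow> bool" where
  "universal_machine U \<longleftrightarrow> partrec_bl U \<and>
     (\<forall>\<phi>. partrec_bl \<phi> \<longrightarrow> (\<exists>c. \<forall>p. U (c @ p) = \<phi> p))"

definition seq_decoder :: "(bool list \<Rightarrow> bool list list) \<Rightarrow> bool" where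
  "seq_decoder Q \<longleftrightarrow> surj Q \<and>
     (\<exists>c. \<forall>s y. reval c [bl_enc s] y \<longleftrightarrow> y = list_encode (map bl_enc (Q s)))"

definition total_rec_D :: "(bool list \<Rightarrow> bool list \<Rightarrow> nat \<Rightarrow> rat) \<Rightarrow> bool" where
  "total_rec_D D \<longleftrightarrow> (\<exists>c. \<forall>s1 s2 n y.
      reval c [bl_enc s1, bl_enc s2, n] y \<longleftrightarrow> y = rat_enc (D s1 s2 n))"

definition interpretation_fun :: "(bool list \<Rightarrow> 'a::metric_space) \<Rightarrow> bool" where
  "interpretation_fun I \<longleftrightarrow> closure (range I) = UNIV"

definition computable_interp :: "(bool list \<Rightarrow> 'a::metric_space) \<Rightarrow> bool" where
  "computable_interp I \<longleftrightarrow> interpretation_fun I \<and>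
     (\<exists>D. total_rec_D D \<and>
        (\<forall>s1 s2 n. \<bar>dist (I s1) (I s2) - real_of_rat (D s1 s2 n)\<bar> \<le> (1/2) ^ n))"

definition orbit_compl ::
  "(bool list \<Rightarrow> bool list option) \<Rightarrow> (bool list \<Rightarrow> bool list list) \<Rightarrow> ('a::metric_space \<Rightarrow> 'a)
    \<Rightarrow> (bool list \<Rightarrow> 'a) \<Rightarrow> 'a \<Rightarrow> nat \<Rightarrow> real \<Rightarrow> nat" where
  "orbit_compl U Q T I x n \<epsilon> = Inf {length p | p. \<exists>s. U p = Some s \<and> length (Q s) = Suc n \<and>
      (\<forall>i\<le>n. dist (I (Q s ! i)) ((T ^^ i) x) < \<epsilon>)}"

definition hyper_structure :: "(real \<Rightarrow> 'h::linordered_field) \<Rightarrow> ((nat \<Rightarrow> real) \<Rightarrow> 'h) \<Rightarrow> bool" where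
  "hyper_structure emb hJ \<longleftrightarrow>
     (\<forall>a b. emb (a + b) = emb a + emb b) \<and> (\<forall>a b. emb (a * b) = emb a * emb b) \<and> emb 1 = 1 \<and>
     (\<forall>a b. emb a \<le> emb b \<longleftrightarrow> a \<le> b) \<and>
     (\<forall>f g. hJ (\<lambda>n. f n + g n) = hJ f + hJ g) \<and> (\<forall>f g. hJ (\<lambda>n. f n * g n) = hJ f * hJ g) \<and>
     hJ (\<lambda>n. 1) = 1 \<and> surj hJ \<and>
     (\<forall>a \<phi>. (\<exists>k\<ge>1. \<forall>n\<ge>1. a \<le> \<phi> (k * n)) \<longrightarrow> emb a \<le> hJ \<phi>)"

definition hsim :: "(real \<Rightarrow> 'h::linordered_field) \<Rightarrow> 'h \<Rightarrow> 'h \<Rightarrow> bool" where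
  "hsim emb a b \<longleftrightarrow> a \<noteq> 0 \<and> b \<noteq> 0 \<and> 0 < a / b \<and> (\<exists>r. a / b \<le> emb r) \<and> (\<exists>r. b / a \<le> emb r)"

definition hclass :: "(real \<Rightarrow> 'h::linordered_field) \<Rightarrow> 'h \<Rightarrow> 'h set" where
  "hclass emb a = {b. hsim emb a b}"

definition hclasses :: "(real \<Rightarrow> 'h::linordered_field) \<Rightarrow> 'h set set" where
  "hclasses emb = {hclass emb a | a. a \<noteq> 0}"

definition cls_le :: "(real \<Rightarrow> 'h::linordered_field) \<Rightarrow> 'h set \<Rightarrow> 'h set \<Rightarrow> bool" where
  "cls_le emb A B \<longleftrightarrow> (\<forall>x\<in>A. \<forall>y\<in>B. hsim emb x y \<or> x < y)"

definition cls_less :: "(real \<Rightarrow> 'h::linordered_field) \<Rightarrow> 'h set \<Rightarrow> 'h set \<Rightarrow> bool" where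
  "cls_less emb A B \<longleftrightarrow> cls_le emb A B \<and> A \<noteq> B"

definition mono_cls_seq :: "(real \<Rightarrow> 'h::linordered_field) \<Rightarrow> (nat \<Rightarrow> 'h set) \<Rightarrow> bool" where
  "mono_cls_seq emb A \<longleftrightarrow> (\<forall>n. A n \<in> hclasses emb) \<and>
     ((\<forall>n m. n \<le> m \<longrightarrow> cls_le emb (A n) (A m)) \<or> (\<forall>n m. n \<le> m \<longrightarrow> cls_le emb (A m) (A n)))"

definition seq_less :: "(real \<Rightarrow> 'h::linordered_field) \<Rightarrow> (nat \<Rightarrow> 'h set) \<Rightarrow> (nat \<Rightarrow> 'h set) \<Rightarrow> bool" where
  "seq_less emb A B \<longleftrightarrow> (\<exists>M. \<forall>n m. M < n \<longrightarrow> M < m \<longrightarrow> cls_less emb (A n) (B m))"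

definition seq_approx :: "(real \<Rightarrow> 'h::linordered_field) \<Rightarrow> (nat \<Rightarrow> 'h set) \<Rightarrow> (nat \<Rightarrow> 'h set) \<Rightarrow> bool" where
  "seq_approx emb A B \<longleftrightarrow> \<not> seq_less emb A B \<and> \<not> seq_less emb B A"

text \<open>Element of R: the \<approx>-class of a monotone sequence of classes.\<close>
definition Rclass :: "(real \<Rightarrow> 'h::linordered_field) \<Rightarrow> (nat \<Rightarrow> 'h set) \<Rightarrow> (nat \<Rightarrow> 'h set) set" where
  "Rclass emb A = {B. mono_cls_seq emb B \<and> seq_approx emb A B}"

definition E_eps :: "(real \<Rightarrow> 'h::linordered_field) \<Rightarrow> ((nat \<Rightarrow> real) \<Rightarrow> 'h)
    \<Rightarrow> (bool list \<Rightarrow> bool list option) \<Rightarrow> (bool list \<Rightarrow> bool list list) \<Rightarrow> ('a::metric_space \<Rightarrow> 'a)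
    \<Rightarrow> (bool list \<Rightarrow> 'a) \<Rightarrow> 'a \<Rightarrow> real \<Rightarrow> 'h set" where
  "E_eps emb hJ U Q T I x \<epsilon> = hclass emb (hJ (\<lambda>n. real (orbit_compl U Q T I x n \<epsilon>)))"

text \<open>E^I(x) = sup_{eps>0} E^I(x,eps): the sup in R of the monotone (nondecreasing as
  eps decreases) family, realised as the \<approx>-class of the sequence eps = 1/(m+1).\<close>
definition E_orbit :: "(real \<Rightarrow> 'h::linordered_field) \<Rightarrow> ((nat \<Rightarrow> real) \<Rightarrow> 'h)
    \<Rightarrow> (bool list \<Rightarrow> bool list option) \<Rightarrow> (bool list \<Rightarrow> bool list list) \<Rightarrow> ('a::metric_space \<Rightarrow> 'a)
    \<Rightarrow> (bool list \<Rightarrow> 'a) \<Rightarrow> 'a \<Rightarrow> (nat \<Rightarrow> 'h set) set" where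
  "E_orbit emb hJ U Q T I x = Rclass emb (\<lambda>m. E_eps emb hJ U Q T I x (1 / real (Suc m)))"

end

theory Submission
  imports Defs
begin


inductive_cases ZrE: "reval Zr xs y"
inductive_cases ScE: "reval Sc xs y"
inductive_cases ProjE: "reval (Proj i) xs y"
inductive_cases CompE: "reval (Comp f gs) xs y"
inductive_cases PrimE: "reval (Prim f g) xs y"
inductive_cases MnE: "reval (Mn f) xs y"

definition tot :: "recf \<Rightarrow> nat \<Rightarrow> (nat list \<Rightarrow> nat) \<Rightarrow> bool" where
  "tot c k F \<longleftrightarrow> (\<forall>xs y. length xs = k \<longrightarrow> (reval c xs y \<longleftrightarrow> y = F xs))"

definition recfn :: "nat \<Rightarrow> (nat list \<Rightarrow> nat) \<Rightarrow> bool" where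
  "recfn k F \<longleftrightarrow> (\<exists>c. tot c k F)"

lemma recfn_cong: "recfn k F \<Longrightarrow> (\<And>xs. length xs = k \<Longrightarrow> F xs = G xs) \<Longrightarrow> recfn k G"
  unfolding recfn_def tot_def by metis

lemma recfn_zero: "recfn k (\<lambda>_. 0)"
  unfolding recfn_def tot_def
  by (rule exI[of _ Zr]) (auto intro: reval.zero elim: ZrE)

lemma recfn_proj: "i < k \<Longrightarrow> recfn k (\<lambda>xs. xs ! i)"
  unfolding recfn_def tot_def
  by (rule exI[of _ "Proj i"]) (auto intro: reval.proj elim: ProjE)

lemma recfn_sc: "recfn 1 (\<lambda>xs. Suc (xs ! 0))"
  unfolding recfn_def tot_def
proof (rule exI[of _ Sc], intro allI impI)
  fix xs :: "nat list" and y assume "length xs = 1"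
  then obtain a where xs: "xs = [a]" by (cases xs) auto
  show "reval Sc xs y = (y = Suc (xs ! 0))"
    unfolding xs by (auto intro: reval.succ elim: ScE)
qed

lemma reval_Comp_iff:
  "reval (Comp f gs) xs z \<longleftrightarrow> (\<exists>ys. length ys = length gs \<and> (\<forall>i<length gs. reval (gs ! i) xs (ys ! i)) \<and> reval f ys z)"
  by (auto intro: reval.comp elim: CompE)

lemma tot_comp:
  assumes f: "tot f m G" and len: "length gs = m" and gs: "\<forall>i<m. tot (gs ! i) k (Fs i)"
  shows "tot (Comp f gs) k (\<lambda>xs. G (map (\<lambda>i. Fs i xs) [0..<m]))"
  unfolding tot_def
proof (intro allI impI)
  fix xs :: "nat list" and y assume lx: "length xs = k"
  have "(\<forall>i<length gs. reval (gs ! i) xs (ys ! i)) \<and> length ys = length gs \<longleftrightarrow> ys = map (\<lambda>i. Fs i xs) [0..<m]" for ys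
    using gs lx len unfolding tot_def by (auto intro: nth_equalityI)
  then have "reval (Comp f gs) xs y \<longleftrightarrow> reval f (map (\<lambda>i. Fs i xs) [0..<m]) y"
    unfolding reval_Comp_iff by (metis (no_types, lifting))
  also have "\<dots> \<longleftrightarrow> y = G (map (\<lambda>i. Fs i xs) [0..<m])"
    using f unfolding tot_def by simp
  finally show "reval (Comp f gs) xs y = (y = G (map (\<lambda>i. Fs i xs) [0..<m]))" .
qed

lemma recfn_comp:
  assumes f: "recfn m G" and gs: "\<forall>i<m. recfn k (Fs i)"
  shows "recfn k (\<lambda>xs. G (map (\<lambda>i. Fs i xs) [0..<m]))"
proof -
  obtain cf where cf: "tot cf m G" using f unfolding recfn_def by auto
  have "\<forall>i. \<exists>c. i < m \<longrightarrow> tot c k (Fs i)" using gs unfolding recfn_def by blast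
  from choice[OF this] obtain cs where cs: "\<forall>i<m. tot (cs i) k (Fs i)" by blast
  have "tot (Comp cf (map cs [0..<m])) k (\<lambda>xs. G (map (\<lambda>i. Fs i xs) [0..<m]))"
    by (rule tot_comp[OF cf]) (use cs in auto)
  then show ?thesis unfolding recfn_def by blast
qed

lemma recfn_comp1: "recfn 1 G \<Longrightarrow> recfn k F \<Longrightarrow> recfn k (\<lambda>xs. G [F xs])"
  using recfn_comp[of 1 G k "\<lambda>i. F"] by auto

lemma recfn_comp2: "recfn 2 G \<Longrightarrow> recfn k F1 \<Longrightarrow> recfn k F2 \<Longrightarrow> recfn k (\<lambda>xs. G [F1 xs, F2 xs])"
proof -
  assume a: "recfn 2 G" "recfn k F1" "recfn k F2"
  have "recfn k (\<lambda>xs. G (map (\<lambda>i. (if i = 0 then F1 else F2) xs) [0..<2]))"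
    by (rule recfn_comp) (use a in \<open>auto simp: less_2_cases_iff\<close>)
  moreover have "[0..<2] = [0::nat, 1]" by (simp add: numeral_2_eq_2)
  ultimately show ?thesis by simp
qed

lemma recfn_comp3: "recfn 3 G \<Longrightarrow> recfn k F1 \<Longrightarrow> recfn k F2 \<Longrightarrow> recfn k F3 \<Longrightarrow>
   recfn k (\<lambda>xs. G [F1 xs, F2 xs, F3 xs])"
proof -
  assume a: "recfn 3 G" "recfn k F1" "recfn k F2" "recfn k F3"
  have "recfn k (\<lambda>xs. G (map (\<lambda>i. (if i = 0 then F1 else if i = 1 then F2 else F3) xs) [0..<3]))"
    by (rule recfn_comp) (use a in \<open>auto simp: numeral_3_eq_3 less_Suc_eq\<close>)
  moreover have "[0..<3] = [0::nat, 1, 2]" by (simp add: numeral_3_eq_3 upt_rec)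
  ultimately show ?thesis by simp
qed

lemma tot_prim:
  assumes f: "tot f k F" and g: "tot g (Suc (Suc k)) G"
  shows "tot (Prim f g) (Suc k) (\<lambda>xs. rec_nat (F (tl xs)) (\<lambda>n y. G (y # n # tl xs)) (hd xs))"
  unfolding tot_def
proof (intro allI impI)
  fix xs :: "nat list" and y assume "length xs = Suc k"
  then obtain n ys where xs: "xs = n # ys" and ly: "length ys = k" by (cases xs) auto
  have "\<forall>y. reval (Prim f g) (n # ys) y \<longleftrightarrow> y = rec_nat (F ys) (\<lambda>n y. G (y # n # ys)) n"
  proof (induction n)
    case 0
    show ?case using f ly unfolding tot_def by (auto intro: reval.prim0 elim: PrimE)
  next
    case (Suc n)
    show ?case
    proof (intro allI iffI)
      fix y assume "reval (Prim f g) (Suc n # ys) y"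
      then obtain y0 where "reval (Prim f g) (n # ys) y0" "reval g (y0 # n # ys) y"
        by (auto elim: PrimE)
      then show "y = rec_nat (F ys) (\<lambda>n y. G (y # n # ys)) (Suc n)"
        using Suc g ly unfolding tot_def by auto
    next
      fix y assume "y = rec_nat (F ys) (\<lambda>n y. G (y # n # ys)) (Suc n)"
      then show "reval (Prim f g) (Suc n # ys) y"
        using Suc g ly unfolding tot_def by (auto intro: reval.primS)
    qed
  qed
  then show "reval (Prim f g) xs y = (y = rec_nat (F (tl xs)) (\<lambda>n y. G (y # n # tl xs)) (hd xs))"
    unfolding xs by simp
qed

lemma recfn_prim:
  assumes "recfn k F" "recfn (Suc (Suc k)) G"
  shows "recfn (Suc k) (\<lambda>xs. rec_nat (F (tl xs)) (\<lambda>n y. G (y # n # tl xs)) (hd xs))"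
  using assms tot_prim unfolding recfn_def by blast

lemma tot_mn:
  assumes f: "tot f (Suc k) F" and ex: "\<forall>xs. length xs = k \<longrightarrow> (\<exists>n. F (n # xs) = 0)"
  shows "tot (Mn f) k (\<lambda>xs. LEAST n. F (n # xs) = 0)"
  unfolding tot_def
proof (intro allI impI)
  fix xs :: "nat list" and y assume lx: "length xs = k"
  have fx: "reval f (n # xs) z \<longleftrightarrow> z = F (n # xs)" for n z using f lx unfolding tot_def by simp
  have "reval (Mn f) xs y \<longleftrightarrow> F (y # xs) = 0 \<and> (\<forall>m<y. F (m # xs) \<noteq> 0)"
  proof
    assume "reval (Mn f) xs y"
    then have h: "reval f (y # xs) 0 \<and> (\<forall>m<y. \<exists>z. reval f (m # xs) (Suc z))" by (rule MnE) (rule conjI)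
    then have "F (y # xs) = 0" by (simp add: fx)
    moreover have "F (m # xs) \<noteq> 0" if "m < y" for m
    proof -
      obtain z where "reval f (m # xs) (Suc z)" using h \<open>m < y\<close> by blast
      then show ?thesis by (simp add: fx)
    qed
    ultimately show "F (y # xs) = 0 \<and> (\<forall>m<y. F (m # xs) \<noteq> 0)" by blast
  next
    assume h: "F (y # xs) = 0 \<and> (\<forall>m<y. F (m # xs) \<noteq> 0)"
    have "\<forall>m<y. \<exists>z. reval f (m # xs) (Suc z)"
    proof (intro allI impI)
      fix m assume "m < y"
      then have "F (m # xs) \<noteq> 0" using h by blast
      then obtain z where "F (m # xs) = Suc z" using not0_implies_Suc by blast
      then show "\<exists>z. reval f (m # xs) (Suc z)" by (simp add: fx)
    qed
    moreover have "reval f (y # xs) 0" using h by (simp add: fx)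
    ultimately show "reval (Mn f) xs y" by (rule reval.mn[rotated])
  qed
  also have "\<dots> \<longleftrightarrow> y = (LEAST n. F (n # xs) = 0)"
  proof
    assume h: "F (y # xs) = 0 \<and> (\<forall>m<y. F (m # xs) \<noteq> 0)"
    show "y = (LEAST n. F (n # xs) = 0)"
    proof (rule Least_equality[symmetric])
      show "F (y # xs) = 0" using h by simp
    next
      fix m assume "F (m # xs) = 0" then show "y \<le> m" using h leI by blast
    qed
  next
    assume y: "y = (LEAST n. F (n # xs) = 0)"
    obtain n where "F (n # xs) = 0" using ex lx by blast
    then have "F ((LEAST n. F (n # xs) = 0) # xs) = 0" by (rule LeastI)
    moreover have "\<forall>m<(LEAST n. F (n # xs) = 0). F (m # xs) \<noteq> 0" using not_less_Least by blast
    ultimately show "F (y # xs) = 0 \<and> (\<forall>m<y. F (m # xs) \<noteq> 0)" unfolding y by blast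
  qed
  finally show "reval (Mn f) xs y = (y = (LEAST n. F (n # xs) = 0))" .
qed

lemma recfn_mn:
  "recfn (Suc k) F \<Longrightarrow> (\<forall>xs. length xs = k \<longrightarrow> (\<exists>n. F (n # xs) = 0)) \<Longrightarrow>
   recfn k (\<lambda>xs. LEAST n. F (n # xs) = 0)"
  unfolding recfn_def using tot_mn by metis


lemma len0E: "length xs = 0 \<Longrightarrow> (xs = [] \<Longrightarrow> P) \<Longrightarrow> P" by simp
lemma len1E: "length xs = 1 \<Longrightarrow> (\<And>a. xs = [a] \<Longrightarrow> P) \<Longrightarrow> P"
  by (cases xs) auto
lemma len2E: "length xs = 2 \<Longrightarrow> (\<And>a b. xs = [a, b] \<Longrightarrow> P) \<Longrightarrow> P"
  by (cases xs; cases "tl xs") (auto simp: numeral_2_eq_2)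
lemma len3E: "length xs = 3 \<Longrightarrow> (\<And>a b c. xs = [a, b, c] \<Longrightarrow> P) \<Longrightarrow> P"
  by (cases xs; cases "tl xs"; cases "tl (tl xs)") (auto simp: numeral_3_eq_3)

lemma recfn_Suc: "recfn k F \<Longrightarrow> recfn k (\<lambda>xs. Suc (F xs))"
  using recfn_comp1[OF recfn_sc, of k F] by simp

lemma recfn_const: "recfn k (\<lambda>_. n)"
proof (induction n)
  case 0 then show ?case by (rule recfn_zero)
next
  case (Suc n) then show ?case using recfn_Suc[of k "\<lambda>_. n"] by simp
qed

lemma rn_add: "rec_nat b (\<lambda>n y. Suc y) a = a + b" by (induction a) auto
lemma rn_mult: "rec_nat (0::nat) (\<lambda>n y. y + b) a = a * b" by (induction a) auto
lemma rn_pred: "rec_nat 0 (\<lambda>n y. n) a = a - Suc 0" by (cases a) auto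
lemma rn_sub: "rec_nat b (\<lambda>n y. y - Suc 0) a = b - a" by (induction a) auto
lemma rn_par: "rec_nat (0::nat) (\<lambda>n y. Suc 0 - y) a = (if odd a then 1 else 0)" by (induction a) auto
lemma rn_tri: "rec_nat 0 (\<lambda>n y. Suc (y + n)) a = triangle a" by (induction a) auto

lemma recfn_prim_cong:
  assumes "recfn k F" "recfn k2 G" "k2 = Suc (Suc k)" "Suc k = k'"
    and "\<And>a xs. length xs = k \<Longrightarrow> rec_nat (F xs) (\<lambda>n y. G (y # n # xs)) a = H (a # xs)"
  shows "recfn k' H"
proof -
  have "recfn (Suc k) (\<lambda>xs. rec_nat (F (tl xs)) (\<lambda>n y. G (y # n # tl xs)) (hd xs))"
    by (rule recfn_prim[OF assms(1) assms(2)[unfolded assms(3)]])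
  then have "recfn k' (\<lambda>xs. rec_nat (F (tl xs)) (\<lambda>n y. G (y # n # tl xs)) (hd xs))"
    using assms(4) by simp
  then show ?thesis
  proof (rule recfn_cong)
    fix xs :: "nat list" assume "length xs = k'"
    then obtain a ys where "xs = a # ys" "length ys = k" using assms(4) by (cases xs) auto
    then show "rec_nat (F (tl xs)) (\<lambda>n y. G (y # n # tl xs)) (hd xs) = H xs" using assms(5) by simp
  qed
qed

lemma recfn_add2: "recfn 2 (\<lambda>xs. xs ! 0 + xs ! 1)"
proof -
  have f: "recfn 1 (\<lambda>xs. xs ! 0)" by (rule recfn_proj) simp
  have g: "recfn 3 (\<lambda>xs. Suc (xs ! 0))" by (rule recfn_Suc, rule recfn_proj) simp
  show ?thesis by (rule recfn_prim_cong[OF f g]) (auto elim!: len1E simp: rn_add)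
qed

lemma recfn_add: "recfn k F \<Longrightarrow> recfn k G \<Longrightarrow> recfn k (\<lambda>xs. F xs + G xs)"
  using recfn_comp2[OF recfn_add2] by simp

lemma recfn_mult2: "recfn 2 (\<lambda>xs. xs ! 0 * xs ! 1)"
proof -
  have f: "recfn 1 (\<lambda>xs. 0)" by (rule recfn_zero)
  have g: "recfn 3 (\<lambda>xs. xs ! 0 + xs ! 2)" by (rule recfn_add; rule recfn_proj) simp_all
  show ?thesis by (rule recfn_prim_cong[OF f g]) (auto elim!: len1E simp: rn_mult)
qed

lemma recfn_mult: "recfn k F \<Longrightarrow> recfn k G \<Longrightarrow> recfn k (\<lambda>xs. F xs * G xs)"
  using recfn_comp2[OF recfn_mult2] by simp

lemma recfn_pred1: "recfn 1 (\<lambda>xs. xs ! 0 - 1)"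
proof -
  have f: "recfn 0 (\<lambda>xs. 0)" by (rule recfn_zero)
  have g: "recfn 2 (\<lambda>xs. xs ! 1)" by (rule recfn_proj) simp
  show ?thesis by (rule recfn_prim_cong[OF f g]) (auto simp: rn_pred)
qed

lemma recfn_pred: "recfn k F \<Longrightarrow> recfn k (\<lambda>xs. F xs - 1)"
  using recfn_comp1[OF recfn_pred1] by simp

lemma recfn_sub2: "recfn 2 (\<lambda>xs. xs ! 1 - xs ! 0)"
proof -
  have f: "recfn 1 (\<lambda>xs. xs ! 0)" by (rule recfn_proj) simp
  have g: "recfn 3 (\<lambda>xs. xs ! 0 - 1)" by (rule recfn_pred, rule recfn_proj) simp
  show ?thesis by (rule recfn_prim_cong[OF f g]) (auto elim!: len1E simp: rn_sub)
qed

lemma recfn_sub: "recfn k F \<Longrightarrow> recfn k G \<Longrightarrow> recfn k (\<lambda>xs. F xs - G xs)"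
  using recfn_comp2[OF recfn_sub2, of k G F] by simp

lemma recfn_par1: "recfn 1 (\<lambda>xs. if odd (xs ! 0) then 1 else 0)"
proof -
  have f: "recfn 0 (\<lambda>xs. 0)" by (rule recfn_zero)
  have g: "recfn 2 (\<lambda>xs. 1 - xs ! 0)" by (rule recfn_sub[OF recfn_const], rule recfn_proj) simp
  show ?thesis by (rule recfn_prim_cong[OF f g]) (auto simp: rn_par)
qed

lemma recfn_tri1: "recfn 1 (\<lambda>xs. triangle (xs ! 0))"
proof -
  have f: "recfn 0 (\<lambda>xs. 0)" by (rule recfn_zero)
  have g: "recfn 2 (\<lambda>xs. xs ! 0 + Suc (xs ! 1))" by (rule recfn_add; (rule recfn_Suc)?; rule recfn_proj) simp_all
  show ?thesis by (rule recfn_prim_cong[OF f g]) (auto simp: rn_tri)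
qed

lemma recfn_tri: "recfn k F \<Longrightarrow> recfn k (\<lambda>xs. triangle (F xs))"
  using recfn_comp1[OF recfn_tri1] by simp

definition recp :: "nat \<Rightarrow> (nat list \<Rightarrow> bool) \<Rightarrow> bool" where
  "recp k P \<longleftrightarrow> recfn k (\<lambda>xs. if P xs then 1 else 0)"

lemma recp_odd: "recfn k F \<Longrightarrow> recp k (\<lambda>xs. odd (F xs))"
  unfolding recp_def using recfn_comp1[OF recfn_par1] by simp

lemma recp_lt: "recfn k F \<Longrightarrow> recfn k G \<Longrightarrow> recp k (\<lambda>xs. F xs < G xs)"
proof -
  assume a: "recfn k F" "recfn k G"
  have "recfn k (\<lambda>xs. 1 - (1 - (G xs - F xs)))" by (intro recfn_sub recfn_const a)
  then show ?thesis unfolding recp_def by (rule recfn_cong) auto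
qed

lemma recp_eq: "recfn k F \<Longrightarrow> recfn k G \<Longrightarrow> recp k (\<lambda>xs. F xs = G xs)"
proof -
  assume a: "recfn k F" "recfn k G"
  have "recfn k (\<lambda>xs. 1 - ((F xs - G xs) + (G xs - F xs)))" by (intro recfn_sub recfn_add recfn_const a)
  then show ?thesis unfolding recp_def by (rule recfn_cong) auto
qed

lemma recp_not: "recp k P \<Longrightarrow> recp k (\<lambda>xs. \<not> P xs)"
proof -
  assume a: "recp k P"
  have "recfn k (\<lambda>xs. 1 - (if P xs then 1 else 0))" using a unfolding recp_def by (intro recfn_sub recfn_const)
  then show ?thesis unfolding recp_def by (rule recfn_cong) auto
qed

lemma recp_and: "recp k P \<Longrightarrow> recp k R \<Longrightarrow> recp k (\<lambda>xs. P xs \<and> R xs)"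
proof -
  assume a: "recp k P" "recp k R"
  have "recfn k (\<lambda>xs. (if P xs then 1 else 0) * (if R xs then 1 else 0))" using a unfolding recp_def by (intro recfn_mult)
  then show ?thesis unfolding recp_def by (rule recfn_cong) auto
qed

lemma recp_or: "recp k P \<Longrightarrow> recp k R \<Longrightarrow> recp k (\<lambda>xs. P xs \<or> R xs)"
proof -
  assume "recp k P" "recp k R"
  then have "recp k (\<lambda>xs. \<not> (\<not> P xs \<and> \<not> R xs))" by (intro recp_not recp_and)
  then show ?thesis by simp
qed

lemma recfn_if: "recp k P \<Longrightarrow> recfn k F \<Longrightarrow> recfn k G \<Longrightarrow> recfn k (\<lambda>xs. if P xs then F xs else G xs)"
proof -
  assume a: "recp k P" "recfn k F" "recfn k G"
  have "recfn k (\<lambda>xs. F xs * (if P xs then 1 else 0) + G xs * (1 - (if P xs then 1 else 0)))"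
    using a unfolding recp_def by (intro recfn_add recfn_mult recfn_sub recfn_const)
  then show ?thesis by (rule recfn_cong) auto
qed

lemma recfn_least: "recp (Suc k) P \<Longrightarrow> (\<forall>xs. length xs = k \<longrightarrow> (\<exists>n. P (n # xs))) \<Longrightarrow>
   recfn k (\<lambda>xs. LEAST n. P (n # xs))"
proof -
  assume p: "recp (Suc k) P" and ex: "\<forall>xs. length xs = k \<longrightarrow> (\<exists>n. P (n # xs))"
  have "recp (Suc k) (\<lambda>xs. \<not> P xs)" using p by (rule recp_not)
  then have "recfn k (\<lambda>xs. LEAST n. (if \<not> P (n # xs) then 1 else 0) = (0::nat))"
    unfolding recp_def by (rule recfn_mn) (use ex in auto)
  then show ?thesis by (rule recfn_cong) (simp add: if_split)
qed


lemma recfn_pe: "recfn k F \<Longrightarrow> recfn k G \<Longrightarrow> recfn k (\<lambda>xs. prod_encode (F xs, G xs))"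
  unfolding prod_encode_def case_prod_conv by (intro recfn_add recfn_tri)

lemma triangle_mono: "a \<le> b \<Longrightarrow> triangle a \<le> triangle b"
  by (induction b rule: dec_induct) auto

lemma triangle_ge: "n \<le> triangle n"
  by (induction n) auto

lemma tsum_eq: "prod_decode z = (m, n) \<Longrightarrow> (LEAST t. z < triangle (Suc t)) = m + n"
proof (rule Least_equality)
  assume d: "prod_decode z = (m, n)"
  then have "prod_encode (prod_decode z) = prod_encode (m, n)" by simp
  then have z: "z = triangle (m + n) + m" unfolding prod_decode_inverse by (simp add: prod_encode_def)
  show "z < triangle (Suc (m + n))" unfolding z by simp
  fix t assume t: "z < triangle (Suc t)"
  show "m + n \<le> t"
  proof (rule ccontr)
    assume "\<not> m + n \<le> t"
    then have "triangle (Suc t) \<le> triangle (m + n)" by (intro triangle_mono) simp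
    then show False using t unfolding z by simp
  qed
qed

lemma recfn_tsum1: "recfn 1 (\<lambda>xs. LEAST t. xs ! 0 < triangle (Suc t))"
proof -
  have p: "recp 2 (\<lambda>xs. xs ! 1 < triangle (Suc (xs ! 0)))"
    by (rule recp_lt; (rule recfn_tri)?; (rule recfn_Suc)?; rule recfn_proj) simp_all
  have "recfn 1 (\<lambda>xs. LEAST n. (n # xs) ! 1 < triangle (Suc ((n # xs) ! 0)))"
  proof (rule recfn_least)
    show "recp (Suc 1) (\<lambda>xs. xs ! 1 < triangle (Suc (xs ! 0)))" using p by (simp add: numeral_2_eq_2)
    show "\<forall>xs. length xs = 1 \<longrightarrow> (\<exists>n. (n # xs) ! 1 < triangle (Suc ((n # xs) ! 0)))"
    proof (intro allI impI)
      fix xs :: "nat list" assume "length xs = 1"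
      have "xs ! 0 < triangle (Suc (xs ! 0))" using triangle_ge[of "Suc (xs ! 0)"] by simp
      then have "(xs ! 0 # xs) ! 1 < triangle (Suc ((xs ! 0 # xs) ! 0))" by simp
      then show "\<exists>n. (n # xs) ! 1 < triangle (Suc ((n # xs) ! 0))" by blast
    qed
  qed
  then show ?thesis by simp
qed

lemma fst_pd: "fst (prod_decode z) = z - triangle (LEAST t. z < triangle (Suc t))"
proof -
  obtain m n where d: "prod_decode z = (m, n)" by (cases "prod_decode z")
  then have "prod_encode (prod_decode z) = prod_encode (m, n)" by simp
  then have z: "z = triangle (m + n) + m" unfolding prod_decode_inverse by (simp add: prod_encode_def)
  show ?thesis using tsum_eq[OF d] d z by simp
qed

lemma snd_pd: "snd (prod_decode z) = (LEAST t. z < triangle (Suc t)) - fst (prod_decode z)"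
proof -
  obtain m n where d: "prod_decode z = (m, n)" by (cases "prod_decode z")
  show ?thesis using tsum_eq[OF d] d by simp
qed

lemma recfn_fst1: "recfn 1 (\<lambda>xs. fst (prod_decode (xs ! 0)))"
proof -
  have "recfn 1 (\<lambda>xs. xs ! 0 - triangle (LEAST t. xs ! 0 < triangle (Suc t)))"
    by (rule recfn_sub[OF recfn_proj recfn_tri[OF recfn_tsum1]]) simp
  then show ?thesis by (simp add: fst_pd)
qed

lemma recfn_fst: "recfn k F \<Longrightarrow> recfn k (\<lambda>xs. fst (prod_decode (F xs)))"
  using recfn_comp1[OF recfn_fst1] by simp

lemma recfn_snd1: "recfn 1 (\<lambda>xs. snd (prod_decode (xs ! 0)))"
proof -
  have "recfn 1 (\<lambda>xs. (LEAST t. xs ! 0 < triangle (Suc t)) - fst (prod_decode (xs ! 0)))"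
    by (rule recfn_sub[OF recfn_tsum1 recfn_fst1])
  then show ?thesis by (rule recfn_cong) (rule snd_pd[symmetric])
qed

lemma recfn_snd: "recfn k F \<Longrightarrow> recfn k (\<lambda>xs. snd (prod_decode (F xs)))"
  using recfn_comp1[OF recfn_snd1] by simp

definition rstep :: "(nat \<Rightarrow> nat) \<Rightarrow> nat \<Rightarrow> nat" where
  "rstep \<tau> st = (if fst (prod_decode st) = 0 then st else
     prod_encode (snd (prod_decode (fst (prod_decode st) - 1)),
                  Suc (prod_encode (\<tau> (fst (prod_decode (fst (prod_decode st) - 1))), snd (prod_decode st)))))"

lemma rstep_nil: "rstep \<tau> (prod_encode (0, a)) = prod_encode (0, a)"
  by (simp add: rstep_def)

lemma rstep_cons: "rstep \<tau> (prod_encode (list_encode (x # xs), list_encode acc)) =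
   prod_encode (list_encode xs, list_encode (\<tau> x # acc))"
  by (simp add: rstep_def)

lemma rstep_iter: "(rstep \<tau> ^^ n) (prod_encode (list_encode L, list_encode acc)) =
   prod_encode (list_encode (drop n L), list_encode (rev (take n (map \<tau> L)) @ acc))"
proof (induction n arbitrary: L acc)
  case 0 then show ?case by simp
next
  case (Suc n)
  show ?case
  proof (cases L)
    case Nil
    have "(rstep \<tau> ^^ m) (prod_encode (0, a)) = prod_encode (0, a)" for m a
      by (induction m) (simp_all add: rstep_nil)
    then show ?thesis using Nil by (simp add: rstep_nil)
  next
    case (Cons x xs)
    have "(rstep \<tau> ^^ Suc n) (prod_encode (list_encode L, list_encode acc)) =
       (rstep \<tau> ^^ n) (prod_encode (list_encode xs, list_encode (\<tau> x # acc)))"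
      unfolding funpow_Suc_right Cons o_apply rstep_cons by (rule refl)
    also have "\<dots> = prod_encode (list_encode (drop n xs), list_encode (rev (take n (map \<tau> xs)) @ \<tau> x # acc))"
      by (rule Suc.IH)
    finally show ?thesis using Cons by simp
  qed
qed

lemma length_le_list_encode: "length L \<le> list_encode L"
proof (induction L)
  case (Cons x xs)
  then show ?case using le_prod_encode_2[of "list_encode xs" x] by simp
qed simp

lemma revmap_iter: "snd (prod_decode ((rstep \<tau> ^^ z) (prod_encode (z, 0)))) =
   list_encode (rev (map \<tau> (list_decode z)))"
proof -
  let ?L = "list_decode z"
  have "(rstep \<tau> ^^ z) (prod_encode (list_encode ?L, list_encode [])) =
     prod_encode (list_encode (drop z ?L), list_encode (rev (take z (map \<tau> ?L)) @ []))"
    by (rule rstep_iter)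
  moreover have "length ?L \<le> z" using length_le_list_encode[of ?L] by simp
  ultimately show ?thesis by simp
qed

lemma recfn_rstep: "recfn 1 (\<lambda>xs. \<tau> (xs ! 0)) \<Longrightarrow> recfn k F \<Longrightarrow> recfn k (\<lambda>xs. rstep \<tau> (F xs))"
proof -
  assume t: "recfn 1 (\<lambda>xs. \<tau> (xs ! 0))" and F: "recfn k F"
  have t': "recfn k G \<Longrightarrow> recfn k (\<lambda>xs. \<tau> (G xs))" for G using recfn_comp1[OF t, of k G] by simp
  have f1: "recfn k (\<lambda>xs. fst (prod_decode (F xs)))" by (rule recfn_fst[OF F])
  have c: "recp k (\<lambda>xs. fst (prod_decode (F xs)) = 0)" by (rule recp_eq[OF f1 recfn_const])
  have r: "recfn k (\<lambda>xs. fst (prod_decode (F xs)) - 1)" by (rule recfn_pred[OF f1])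
  have a1: "recfn k (\<lambda>xs. snd (prod_decode (fst (prod_decode (F xs)) - 1)))" by (rule recfn_snd[OF r])
  have a2: "recfn k (\<lambda>xs. \<tau> (fst (prod_decode (fst (prod_decode (F xs)) - 1))))" by (rule t'[OF recfn_fst[OF r]])
  have a3: "recfn k (\<lambda>xs. snd (prod_decode (F xs)))" by (rule recfn_snd[OF F])
  have e: "recfn k (\<lambda>xs. prod_encode (snd (prod_decode (fst (prod_decode (F xs)) - 1)),
                  Suc (prod_encode (\<tau> (fst (prod_decode (fst (prod_decode (F xs)) - 1))), snd (prod_decode (F xs))))))"
    by (rule recfn_pe[OF a1 recfn_Suc[OF recfn_pe[OF a2 a3]]])
  show ?thesis unfolding rstep_def by (rule recfn_if[OF c F e])
qed

lemma recfn_revmap: "recfn 1 (\<lambda>xs. \<tau> (xs ! 0)) \<Longrightarrow> recfn k F \<Longrightarrow>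
  recfn k (\<lambda>xs. list_encode (rev (map \<tau> (list_decode (F xs)))))"
proof -
  assume t: "recfn 1 (\<lambda>xs. \<tau> (xs ! 0))" and F: "recfn k F"
  have f: "recfn 1 (\<lambda>xs. prod_encode (xs ! 0, 0))" by (rule recfn_pe[OF recfn_proj recfn_const]) simp
  have g: "recfn 3 (\<lambda>xs. rstep \<tau> (xs ! 0))" by (rule recfn_rstep[OF t recfn_proj]) simp
  have it: "recfn 2 (\<lambda>xs. (rstep \<tau> ^^ (xs ! 0)) (prod_encode (xs ! 1, 0)))"
  proof (rule recfn_prim_cong[OF f g])
    fix a :: nat and xs :: "nat list" assume "length xs = 1"
    show "rec_nat (prod_encode (xs ! 0, 0)) (\<lambda>n y. rstep \<tau> ((y # n # xs) ! 0)) a =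
        (rstep \<tau> ^^ ((a # xs) ! 0)) (prod_encode ((a # xs) ! 1, 0))"
      by (induction a) simp_all
  qed simp_all
  have "recfn k (\<lambda>xs. snd (prod_decode ((rstep \<tau> ^^ F xs) (prod_encode (F xs, 0)))))"
    using recfn_snd[OF recfn_comp2[OF it F F]] by simp
  then show ?thesis by (simp add: revmap_iter)
qed


lemma bl_enc_inj: "bl_enc s = bl_enc t \<Longrightarrow> s = t"
proof (induction s arbitrary: t)
  case Nil then show ?case by (cases t) (auto split: if_splits)
next
  case (Cons b s)
  then obtain a l where t: "t = a # l" by (cases t) (auto split: if_splits)
  have e: "2 * bl_enc s + (if b then 2 else 1) = 2 * bl_enc l + (if a then 2 else 1)"
    using Cons.prems unfolding t by simp
  have "b = a \<and> bl_enc s = bl_enc l" using e by (auto split: if_splits; presburger)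
  then show ?case using Cons.IH t by blast
qed

lemma bl_enc_surj: "\<exists>s. bl_enc s = n"
proof (induction n rule: less_induct)
  case (less n)
  show ?case
  proof (cases "n = 0")
    case True then show ?thesis by (intro exI[of _ "[]"]) simp
  next
    case False
    show ?thesis
    proof (cases "even n")
      case True
      define m where "m = n div 2 - 1"
      have m: "n = 2 * m + 2" using True False unfolding m_def by (auto elim!: evenE)
      then have "m < n" by simp
      then obtain s where "bl_enc s = m" using less.IH by blast
      then show ?thesis using m by (intro exI[of _ "True # s"]) simp
    next
      case odd: False
      define m where "m = n div 2"
      have m: "n = 2 * m + 1" using odd unfolding m_def by (auto elim!: oddE)
      then have "m < n" by simp
      then obtain s where "bl_enc s = m" using less.IH by blast
      then show ?thesis using m by (intro exI[of _ "False # s"]) simp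
    qed
  qed
qed

definition bl_dec :: "nat \<Rightarrow> bool list" where "bl_dec n = (SOME s. bl_enc s = n)"

lemma bl_enc_dec[simp]: "bl_enc (bl_dec n) = n"
  unfolding bl_dec_def by (rule someI_ex[OF bl_enc_surj])

lemma bl_dec_enc[simp]: "bl_dec (bl_enc s) = s"
  by (rule bl_enc_inj) simp

lemma recfn_Q:
  assumes "seq_decoder Q"
  shows "recfn 1 (\<lambda>xs. list_encode (map bl_enc (Q (bl_dec (xs ! 0)))))"
proof -
  obtain c where c: "\<forall>s y. reval c [bl_enc s] y \<longleftrightarrow> y = list_encode (map bl_enc (Q s))"
    using assms unfolding seq_decoder_def by blast
  have "tot c 1 (\<lambda>xs. list_encode (map bl_enc (Q (bl_dec (xs ! 0)))))"
    unfolding tot_def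
  proof (intro allI impI)
    fix xs :: "nat list" and y assume "length xs = 1"
    then obtain a where xs: "xs = [a]" by (cases xs) auto
    show "reval c xs y = (y = list_encode (map bl_enc (Q (bl_dec (xs ! 0)))))"
      using c[rule_format, of "bl_dec a" y] unfolding xs by simp
  qed
  then show ?thesis unfolding recfn_def by blast
qed

lemma recfn_D:
  assumes "total_rec_D D"
  shows "recfn 3 (\<lambda>xs. rat_enc (D (bl_dec (xs ! 0)) (bl_dec (xs ! 1)) (xs ! 2)))"
proof -
  obtain c where c: "\<forall>s1 s2 n y. reval c [bl_enc s1, bl_enc s2, n] y \<longleftrightarrow> y = rat_enc (D s1 s2 n)"
    using assms unfolding total_rec_D_def by blast
  have "tot c 3 (\<lambda>xs. rat_enc (D (bl_dec (xs ! 0)) (bl_dec (xs ! 1)) (xs ! 2)))"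
    unfolding tot_def
  proof (intro allI impI)
    fix xs :: "nat list" and y assume "length xs = 3"
    then obtain a b n where xs: "xs = [a, b, n]" by (rule len3E)
    show "reval c xs y = (y = rat_enc (D (bl_dec (xs ! 0)) (bl_dec (xs ! 1)) (xs ! 2)))"
      using c[rule_format, of "bl_dec a" "bl_dec b" n y] unfolding xs by simp
  qed
  then show ?thesis unfolding recfn_def by blast
qed

lemma frac_lt: "(0::'a::linordered_field) < d \<Longrightarrow> 0 < b \<Longrightarrow> x / d < y / b \<longleftrightarrow> x * b < y * d"
  by (simp add: divide_less_eq less_divide_eq mult.commute mult.left_commute)

definition rt :: "nat \<Rightarrow> nat \<Rightarrow> nat \<Rightarrow> bool" where
  "rt a b r \<longleftrightarrow> odd (fst (prod_decode r)) \<or> fst (prod_decode r) * b < 2 * a * snd (prod_decode r)"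

lemma rt_correct:
  assumes b: "b > 0"
  shows "rt a b (rat_enc q) \<longleftrightarrow> q < of_nat a / of_nat b"
proof -
  obtain p d where qd: "quotient_of q = (p, d)" by (cases "quotient_of q")
  have d: "d > 0" using quotient_of_denom_pos[OF qd] .
  have q: "q = of_int p / of_int d" using quotient_of_div[OF qd] .
  have re: "rat_enc q = prod_encode (int_encode p, nat d)" unfolding rat_enc_def qd by simp
  show ?thesis
  proof (cases "p \<ge> 0")
    case True
    have ie: "int_encode p = 2 * nat p" unfolding int_encode_def sum_encode_def using True by simp
    have "rt a b (rat_enc q) \<longleftrightarrow> 2 * nat p * b < 2 * a * nat d"
      unfolding rt_def re ie by simp
    also have "\<dots> \<longleftrightarrow> p * int b < int a * d"
    proof -
      have "2 * nat p * b < 2 * a * nat d \<longleftrightarrow> int (2 * nat p * b) < int (2 * a * nat d)" by linarith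
      also have "\<dots> \<longleftrightarrow> p * int b < int a * d" using True d by simp
      finally show ?thesis .
    qed
    also have "\<dots> \<longleftrightarrow> (of_int p * of_nat b :: rat) < of_nat a * of_int d"
    proof -
      have "(of_int p * of_nat b :: rat) = of_int (p * int b)" by simp
      moreover have "(of_nat a * of_int d :: rat) = of_int (int a * d)" by simp
      ultimately show ?thesis by (simp only: of_int_less_iff)
    qed
    also have "\<dots> \<longleftrightarrow> of_int p / of_int d < (of_nat a / of_nat b :: rat)"
    proof -
      have d': "0 < (of_int d :: rat)" using d by simp
      have b': "0 < (of_nat b :: rat)" using b by simp
      show ?thesis using frac_lt[OF d' b', of "of_int p" "of_nat a"] by blast
    qed
    finally show ?thesis unfolding q .
  next
    case False
    have ie: "int_encode p = Suc (2 * nat (- p - 1))" unfolding int_encode_def sum_encode_def using False by simp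
    have "rt a b (rat_enc q)" unfolding rt_def re ie by simp
    moreover have "q < 0" unfolding q using False d by (simp add: divide_neg_pos)
    moreover have "(0::rat) \<le> of_nat a / of_nat b" by simp
    ultimately show ?thesis by linarith
  qed
qed

lemma recp_rt: "recfn k F \<Longrightarrow> recp k (\<lambda>xs. rt a b (F xs))"
proof -
  assume F: "recfn k F"
  have f1: "recfn k (\<lambda>xs. fst (prod_decode (F xs)))" by (rule recfn_fst[OF F])
  have f2: "recfn k (\<lambda>xs. snd (prod_decode (F xs)))" by (rule recfn_snd[OF F])
  have "recp k (\<lambda>xs. odd (fst (prod_decode (F xs))) \<or> fst (prod_decode (F xs)) * b < 2 * a * snd (prod_decode (F xs)))"
    by (rule recp_or[OF recp_odd[OF f1] recp_lt[OF recfn_mult[OF f1 recfn_const] recfn_mult[OF recfn_const f2]]])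
  then show ?thesis unfolding rt_def .
qed

fun tab :: "(nat \<Rightarrow> nat \<Rightarrow> bool) \<Rightarrow> (nat \<times> nat) list \<Rightarrow> nat \<Rightarrow> nat" where
  "tab P [] v = 0"
| "tab P (ab # L) v = (if P v (fst ab) then snd ab else tab P L v)"

lemma recp_comp2: "recp 2 P \<Longrightarrow> recfn k F \<Longrightarrow> recfn k G \<Longrightarrow> recp k (\<lambda>xs. P [F xs, G xs])"
  unfolding recp_def by (rule recfn_comp2)

lemma recfn_tab:
  assumes P: "recp 2 (\<lambda>xs. P (xs ! 0) (xs ! 1))"
  shows "recfn 1 (\<lambda>xs. tab P L (xs ! 0))"
proof (induction L)
  case Nil then show ?case by (simp add: recfn_zero)
next
  case (Cons ab L)
  have p0: "recfn 1 (\<lambda>xs. xs ! 0)" by (rule recfn_proj) simp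
  have c: "recp 1 (\<lambda>xs. P (xs ! 0) (fst ab))"
    using recp_comp2[OF P p0 recfn_const[of 1 "fst ab"]] by simp
  show ?case using recfn_if[OF c recfn_const Cons.IH] by simp
qed

lemma tab_prop:
  assumes "\<exists>ab\<in>set L. P v (fst ab)"
  shows "\<exists>ab\<in>set L. P v (fst ab) \<and> tab P L v = snd ab"
  using assms by (induction L) auto


lemma reval_Comp1: "reval (Comp f [g]) xs y \<longleftrightarrow> (\<exists>z. reval g xs z \<and> reval f [z] y)"
proof -
  have "(\<exists>ys. length ys = 1 \<and> (\<forall>i<1. reval ([g] ! i) xs (ys ! i)) \<and> reval f ys y) \<longleftrightarrow>
        (\<exists>z. reval g xs z \<and> reval f [z] y)"
  proof
    assume "\<exists>ys. length ys = 1 \<and> (\<forall>i<1. reval ([g] ! i) xs (ys ! i)) \<and> reval f ys y"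
    then obtain ys where "length ys = 1" "\<forall>i<1. reval ([g] ! i) xs (ys ! i)" "reval f ys y" by blast
    moreover obtain z where "ys = [z]" using \<open>length ys = 1\<close> by (rule len1E)
    ultimately show "\<exists>z. reval g xs z \<and> reval f [z] y" by auto
  next
    assume "\<exists>z. reval g xs z \<and> reval f [z] y"
    then obtain z where "reval g xs z" "reval f [z] y" by blast
    then show "\<exists>ys. length ys = 1 \<and> (\<forall>i<1. reval ([g] ! i) xs (ys ! i)) \<and> reval f ys y"
      by (intro exI[of _ "[z]"]) simp
  qed
  then show ?thesis unfolding reval_Comp_iff by simp
qed

lemma partrec_total:
  assumes U: "partrec_bl U" and g: "recfn 1 (\<lambda>xs. g (xs ! 0))"
  shows "partrec_bl (\<lambda>p. map_option (\<lambda>s. bl_dec (g (bl_enc s))) (U p))"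
proof -
  obtain cU where cU: "\<forall>s y. reval cU [bl_enc s] y \<longleftrightarrow> map_option bl_enc (U s) = Some y"
    using U unfolding partrec_bl_def by blast
  obtain cg where cg: "tot cg 1 (\<lambda>xs. g (xs ! 0))" using g unfolding recfn_def by blast
  have cU': "reval cU [bl_enc s] y \<longleftrightarrow> map_option bl_enc (U s) = Some y" for s y using cU by blast
  have cg': "reval cg [z] y \<longleftrightarrow> y = g z" for z y using cg unfolding tot_def by simp
  show ?thesis unfolding partrec_bl_def
  proof (intro exI[of _ "Comp cg [cU]"] allI)
    fix s y
    show "reval (Comp cg [cU]) [bl_enc s] y =
      (map_option bl_enc (map_option (\<lambda>s. bl_dec (g (bl_enc s))) (U s)) = Some y)"
      unfolding reval_Comp1 cg' cU' by (cases "U s") auto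
  qed
qed

lemma const_prog:
  assumes U: "universal_machine U"
  shows "\<exists>p. U p = Some s0"
proof -
  obtain c where c: "tot c 1 (\<lambda>_. bl_enc s0)" using recfn_const unfolding recfn_def by blast
  have "partrec_bl (\<lambda>_. Some s0)" unfolding partrec_bl_def
  proof (intro exI[of _ c] allI)
    fix s y show "reval c [bl_enc s] y = (map_option bl_enc (Some s0) = Some y)"
      using c unfolding tot_def by auto
  qed
  then obtain p where "\<forall>q. U (p @ q) = Some s0" using U unfolding universal_machine_def by blast
  then show ?thesis by (metis append_Nil2)
qed

lemma translate:
  assumes U: "universal_machine U" and Qd: "seq_decoder Q" and t: "recfn 1 (\<lambda>xs. \<tau> (xs ! 0))"
  shows "\<exists>c. \<forall>p s. U p = Some s \<longrightarrow>
     (\<exists>s'. U (c @ p) = Some s' \<and> Q s' = map (\<lambda>u. bl_dec (\<tau> (bl_enc u))) (Q s))"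
proof -
  define qc where "qc z = list_encode (map bl_enc (Q (bl_dec z)))" for z
  have q1: "recfn 1 (\<lambda>xs. qc (xs ! 0))" unfolding qc_def by (rule recfn_Q[OF Qd])
  have q2a: "recfn 2 (\<lambda>xs. qc (xs ! 0))" using recfn_comp1[OF q1 recfn_proj[of 0 2]] by simp
  have q2b: "recfn 2 (\<lambda>xs. qc (xs ! 1))" using recfn_comp1[OF q1 recfn_proj[of 1 2]] by simp
  have idr: "recfn 1 (\<lambda>xs. id (xs ! 0))" using recfn_proj[of 0 1] by simp
  define P where "P xs \<longleftrightarrow> list_encode (rev (map id (list_decode (qc (xs ! 0))))) =
       list_encode (rev (map \<tau> (list_decode (qc (xs ! 1)))))" for xs
  have p: "recp 2 P" unfolding P_def
    by (rule recp_eq[OF recfn_revmap[OF idr q2a] recfn_revmap[OF t q2b]])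
  have key: "P [bl_enc s', z] \<longleftrightarrow> Q s' = map (\<lambda>u. bl_dec (\<tau> (bl_enc u))) (Q (bl_dec z))" for s' z
  proof -
    have "P [bl_enc s', z] \<longleftrightarrow> map bl_enc (Q s') = map \<tau> (map bl_enc (Q (bl_dec z)))"
      unfolding P_def qc_def by (simp add: list_encode_eq)
    also have "\<dots> \<longleftrightarrow> Q s' = map (\<lambda>u. bl_dec (\<tau> (bl_enc u))) (Q (bl_dec z))"
    proof
      assume h: "map bl_enc (Q s') = map \<tau> (map bl_enc (Q (bl_dec z)))"
      have "Q s' = map bl_dec (map bl_enc (Q s'))" by (simp add: comp_def)
      also have "\<dots> = map (\<lambda>u. bl_dec (\<tau> (bl_enc u))) (Q (bl_dec z))" unfolding h by simp
      finally show "Q s' = map (\<lambda>u. bl_dec (\<tau> (bl_enc u))) (Q (bl_dec z))" .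
    next
      assume "Q s' = map (\<lambda>u. bl_dec (\<tau> (bl_enc u))) (Q (bl_dec z))"
      then show "map bl_enc (Q s') = map \<tau> (map bl_enc (Q (bl_dec z)))" by simp
    qed
    finally show ?thesis .
  qed
  have surjQ: "surj Q" using Qd unfolding seq_decoder_def by blast
  have ex: "\<exists>n. P (n # xs)" if l: "length xs = 1" for xs
  proof -
    obtain z where xs: "xs = [z]" using l by (rule len1E)
    obtain s' where "Q s' = map (\<lambda>u. bl_dec (\<tau> (bl_enc u))) (Q (bl_dec z))" using surjQ by (metis surjD)
    then have "P [bl_enc s', z]" using key by blast
    then show ?thesis unfolding xs by blast
  qed
  define g where "g z = (LEAST n. P [n, z])" for z
  have g: "recfn 1 (\<lambda>xs. g (xs ! 0))"
  proof -
    have "recfn 1 (\<lambda>xs. LEAST n. P (n # xs))"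
      by (rule recfn_least) (use p ex in \<open>simp_all add: numeral_2_eq_2\<close>)
    then show ?thesis unfolding g_def
    proof (rule recfn_cong)
      fix xs :: "nat list" assume "length xs = 1"
      then obtain z where "xs = [z]" by (rule len1E)
      then show "(LEAST n. P (n # xs)) = (LEAST n. P [n, xs ! 0])" by simp
    qed
  qed
  have gP: "Q (bl_dec (g z)) = map (\<lambda>u. bl_dec (\<tau> (bl_enc u))) (Q (bl_dec z))" for z
  proof -
    obtain n where "P (n # [z])" using ex[of "[z]"] by auto
    then have "P [g z, z]" unfolding g_def by (rule LeastI)
    then have "P [bl_enc (bl_dec (g z)), z]" by simp
    then show ?thesis using key by blast
  qed
  have "partrec_bl (\<lambda>p. map_option (\<lambda>s. bl_dec (g (bl_enc s))) (U p))"
    by (rule partrec_total[OF _ g]) (use U in \<open>simp add: universal_machine_def\<close>)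
  then obtain c where c: "\<forall>p. U (c @ p) = map_option (\<lambda>s. bl_dec (g (bl_enc s))) (U p)"
    using U unfolding universal_machine_def by blast
  show ?thesis
  proof (rule exI[of _ c], intro allI impI)
    fix p s assume "U p = Some s"
    then show "\<exists>s'. U (c @ p) = Some s' \<and> Q s' = map (\<lambda>u. bl_dec (\<tau> (bl_enc u))) (Q s)"
      using c gP[of "bl_enc s"] by simp
  qed
qed


lemma pow_half_small: "(0::real) < e \<Longrightarrow> \<exists>N. (1/2::real) ^ N < e"
proof -
  assume e: "0 < e"
  obtain N where N: "inverse (real (Suc N)) < e" using reals_Archimedean[OF e] by blast
  have "real (Suc N) \<le> 2 ^ N" using less_exp[of N] by (metis Suc_leI of_nat_le_iff of_nat_numeral of_nat_power)
  then have "(1/2::real) ^ N \<le> inverse (real (Suc N))"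
    by (simp add: power_one_over field_simps)
  then show ?thesis using N by (intro exI[of _ N]) linarith
qed

lemma dense_approx: "interpretation_fun I \<Longrightarrow> e > 0 \<Longrightarrow> \<exists>s. dist (I s) y < e"
  unfolding interpretation_fun_def using closure_approachable[of y "range I"] by auto

lemma approx_tab:
  fixes I J :: "bool list \<Rightarrow> 'a::metric_space"
  assumes cpt: "compact (UNIV::'a set)" and U: "universal_machine U" and Qd: "seq_decoder Q"
    and cI: "computable_interp I" and dJ: "interpretation_fun J" and eta: "\<eta> > 0"
  shows "\<exists>c. \<forall>p s. U p = Some s \<longrightarrow> (\<exists>s'. U (c @ p) = Some s' \<and> length (Q s') = length (Q s) \<and>
     (\<forall>i<length (Q s). dist (J (Q s' ! i)) (I (Q s ! i)) < \<eta>))"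
proof -
  obtain D where D: "total_rec_D D"
    and Dap: "\<And>s1 s2 n. \<bar>dist (I s1) (I s2) - real_of_rat (D s1 s2 n)\<bar> \<le> (1/2) ^ n"
    using cI unfolding computable_interp_def by blast
  have dI: "interpretation_fun I" using cI unfolding computable_interp_def by blast
  have "0 < \<eta> / 2" using eta by simp
  then obtain M where M: "inverse (real (Suc M)) < \<eta> / 2" using reals_Archimedean by blast
  define \<rho> where "\<rho> = 1 / real (Suc M)"
  have rho: "0 < \<rho>" "\<rho> < \<eta> / 2" unfolding \<rho>_def using M by (simp_all add: inverse_eq_divide)
  obtain N where N: "(1/2::real) ^ N < \<rho> / 4" using pow_half_small[of "\<rho>/4"] rho by auto
  have "seq_compact (UNIV::'a set)" using cpt compact_eq_seq_compact_metric by blast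
  then obtain K where K: "finite K" "(UNIV::'a set) \<subseteq> (\<Union>x\<in>K. ball x (\<rho>/4))"
    using seq_compact_imp_totally_bounded[of "UNIV::'a set"] rho by (meson zero_less_divide_iff zero_less_numeral)
  have r4: "0 < \<rho>/4" using rho by simp
  have "\<forall>y. \<exists>s. dist (I s) y < \<rho>/4" using dense_approx[OF dI r4] by blast
  then obtain sI where sI: "\<And>y. dist (I (sI y)) y < \<rho>/4" by metis
  have "\<forall>y. \<exists>s. dist (J s) y < \<rho>/4" using dense_approx[OF dJ r4] by blast
  then obtain tJ where tJ: "\<And>y. dist (J (tJ y)) y < \<rho>/4" by metis
  obtain ks where ks: "set ks = K" using finite_list[OF K(1)] by blast
  define L where "L = map (\<lambda>y. (bl_enc (sI y), bl_enc (tJ y))) ks"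
  define P where "P v a \<longleftrightarrow> rt 1 (Suc M) (rat_enc (D (bl_dec v) (bl_dec a) N))" for v a
  have Pc: "P v a \<longleftrightarrow> real_of_rat (D (bl_dec v) (bl_dec a) N) < \<rho>" for v a
  proof -
    have "P v a \<longleftrightarrow> D (bl_dec v) (bl_dec a) N < of_nat 1 / of_nat (Suc M)"
      unfolding P_def by (rule rt_correct) simp
    also have "\<dots> \<longleftrightarrow> real_of_rat (D (bl_dec v) (bl_dec a) N) < real_of_rat (of_nat 1 / of_nat (Suc M))"
      by (simp only: of_rat_less)
    also have "real_of_rat (of_nat 1 / of_nat (Suc M)) = \<rho>"
      unfolding \<rho>_def by (simp add: of_rat_divide of_rat_add)
    finally show ?thesis .
  qed
  have rD: "recfn 2 (\<lambda>xs. rat_enc (D (bl_dec (xs ! 0)) (bl_dec (xs ! 1)) N))"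
  proof -
    have "recfn 2 (\<lambda>xs. rat_enc (D (bl_dec ([xs ! 0, xs ! 1, N] ! 0)) (bl_dec ([xs ! 0, xs ! 1, N] ! 1)) ([xs ! 0, xs ! 1, N] ! 2)))"
      by (rule recfn_comp3[OF recfn_D[OF D] recfn_proj recfn_proj recfn_const]) simp_all
    then show ?thesis by simp
  qed
  have rP: "recp 2 (\<lambda>xs. P (xs ! 0) (xs ! 1))" unfolding P_def by (rule recp_rt[OF rD])
  define \<tau> where "\<tau> = tab P L"
  have rt: "recfn 1 (\<lambda>xs. \<tau> (xs ! 0))" unfolding \<tau>_def by (rule recfn_tab[OF rP])
  have key: "dist (J (bl_dec (\<tau> (bl_enc u)))) (I u) < \<eta>" for u
  proof -
    have "I u \<in> (\<Union>x\<in>K. ball x (\<rho>/4))" using K(2) by blast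
    then obtain y where y: "y \<in> K" "dist y (I u) < \<rho>/4" by (auto simp only: mem_ball UN_iff)
    have "dist (I u) (I (sI y)) \<le> dist (I u) y + dist y (I (sI y))" by (rule dist_triangle)
    also have "\<dots> < \<rho>/2" using y(2) sI[of y] by (simp add: dist_commute)
    finally have d1: "dist (I u) (I (sI y)) < \<rho>/2" .
    have "real_of_rat (D u (sI y) N) \<le> dist (I u) (I (sI y)) + (1/2)^N" using Dap[of u "sI y" N] by linarith
    then have "real_of_rat (D u (sI y) N) < \<rho>" using d1 N rho(1) by linarith
    then have "P (bl_enc u) (bl_enc (sI y))" unfolding Pc by simp
    moreover have "(bl_enc (sI y), bl_enc (tJ y)) \<in> set L" unfolding L_def using y(1) ks by auto
    ultimately have "\<exists>ab\<in>set L. P (bl_enc u) (fst ab)" by force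
    from tab_prop[of L P "bl_enc u", OF this] obtain ab where ab: "ab \<in> set L" "P (bl_enc u) (fst ab)" "\<tau> (bl_enc u) = snd ab"
      unfolding \<tau>_def by blast
    then obtain y' where y': "ab = (bl_enc (sI y'), bl_enc (tJ y'))" unfolding L_def by auto
    have t: "bl_dec (\<tau> (bl_enc u)) = tJ y'" using ab(3) y' by simp
    have "real_of_rat (D u (sI y') N) < \<rho>" using ab(2) y' Pc by simp
    moreover have "dist (I u) (I (sI y')) \<le> real_of_rat (D u (sI y') N) + (1/2)^N" using Dap[of u "sI y'" N] by linarith
    ultimately have d2: "dist (I (sI y')) (I u) < \<rho> + \<rho>/4" using N by (simp add: dist_commute)
    have "dist (J (tJ y')) (I u) \<le> dist (J (tJ y')) y' + dist y' (I u)" by (rule dist_triangle)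
    also have "dist y' (I u) \<le> dist y' (I (sI y')) + dist (I (sI y')) (I u)" by (rule dist_triangle)
    finally have "dist (J (tJ y')) (I u) < \<rho>/4 + (\<rho>/4 + (\<rho> + \<rho>/4))"
      using tJ[of y'] sI[of y'] d2 by (simp add: dist_commute)
    then show ?thesis unfolding t using rho by linarith
  qed
  obtain c where c: "\<forall>p s. U p = Some s \<longrightarrow> (\<exists>s'. U (c @ p) = Some s' \<and> Q s' = map (\<lambda>u. bl_dec (\<tau> (bl_enc u))) (Q s))"
    using translate[OF U Qd rt] by blast
  show ?thesis
  proof (rule exI[of _ c], intro allI impI)
    fix p s assume "U p = Some s"
    then obtain s' where s': "U (c @ p) = Some s'" "Q s' = map (\<lambda>u. bl_dec (\<tau> (bl_enc u))) (Q s)" using c by blast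
    show "\<exists>s'. U (c @ p) = Some s' \<and> length (Q s') = length (Q s) \<and> (\<forall>i<length (Q s). dist (J (Q s' ! i)) (I (Q s ! i)) < \<eta>)"
      using s' key by (intro exI[of _ s']) simp
  qed
qed


context
  fixes emb :: "real \<Rightarrow> 'h::linordered_field" and hJ :: "(nat \<Rightarrow> real) \<Rightarrow> 'h"
  assumes hs: "hyper_structure emb hJ"
begin

lemma e_add: "emb (a + b) = emb a + emb b" using hs unfolding hyper_structure_def by blast
lemma e_mult: "emb (a * b) = emb a * emb b" using hs unfolding hyper_structure_def by blast
lemma e_one: "emb 1 = 1" using hs unfolding hyper_structure_def by blast
lemma e_le: "emb a \<le> emb b \<longleftrightarrow> a \<le> b" using hs unfolding hyper_structure_def by blast
lemma e_less: "emb a < emb b \<longleftrightarrow> a < b" using e_le by (meson not_le)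
lemma e_zero: "emb 0 = 0" using e_add[of 0 0] by simp
lemma e_neg: "emb (- a) = - emb a" using e_add[of a "-a"] e_zero by (simp add: eq_neg_iff_add_eq_0)
lemma j_add: "hJ (\<lambda>n. f n + g n) = hJ f + hJ g" using hs unfolding hyper_structure_def by blast
lemma j_k: "(\<exists>k\<ge>1. \<forall>n\<ge>1. a \<le> \<phi> (k * n)) \<Longrightarrow> emb a \<le> hJ \<phi>"
  using hs unfolding hyper_structure_def by blast

lemma j_diff: "hJ (\<lambda>n. f n - g n) = hJ f - hJ g"
proof -
  have "hJ (\<lambda>n. (f n - g n) + g n) = hJ (\<lambda>n. f n - g n) + hJ g" by (rule j_add)
  then show ?thesis by simp
qed

lemma j_mono_k: "(\<exists>k\<ge>1. \<forall>n\<ge>1. f (k * n) \<le> g (k * n)) \<Longrightarrow> hJ f \<le> hJ g"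
proof -
  assume "\<exists>k\<ge>1. \<forall>n\<ge>1. f (k * n) \<le> g (k * n)"
  then have "\<exists>k\<ge>1. \<forall>n\<ge>1. 0 \<le> g (k * n) - f (k * n)" by auto
  then have "emb 0 \<le> hJ (\<lambda>n. g n - f n)" by (rule j_k)
  then show ?thesis unfolding j_diff e_zero by simp
qed

lemma j_const: "hJ (\<lambda>n. c) = emb c"
proof -
  have "emb c \<le> hJ (\<lambda>n. c)" by (rule j_k) auto
  moreover have "emb (- c) \<le> hJ (\<lambda>n. 0 - c)" by (rule j_k) auto
  moreover have "hJ (\<lambda>n. 0 - c) = hJ (\<lambda>n. 0) - hJ (\<lambda>n. c)" by (rule j_diff)
  moreover have "hJ (\<lambda>n. 0) = 0" using j_diff[of "\<lambda>n. 0" "\<lambda>n. 0"] by simp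
  ultimately show ?thesis unfolding e_neg by simp
qed

lemma j_add_const: "hJ (\<lambda>n. f n + c) = hJ f + emb c"
  using j_add[of f "\<lambda>n. c"] j_const by simp

lemma hsim_sym: "hsim emb a b \<Longrightarrow> hsim emb b a"
  unfolding hsim_def by (auto simp: zero_less_divide_iff)

lemma hsim_refl: "a \<noteq> 0 \<Longrightarrow> hsim emb a a"
  unfolding hsim_def using e_one by (auto intro!: exI[of _ 1])

lemma hsim_sign: "hsim emb a b \<Longrightarrow> 0 < a \<longleftrightarrow> 0 < b"
  unfolding hsim_def by (auto simp: zero_less_divide_iff)

lemma hsim_trans:
  assumes ab: "hsim emb a b" and bc: "hsim emb b c" shows "hsim emb a c"
proof -
  obtain r1 r2 r3 r4 where h: "a \<noteq> 0" "b \<noteq> 0" "c \<noteq> 0" "0 < a / b" "0 < b / c"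
    "a / b \<le> emb r1" "b / a \<le> emb r2" "b / c \<le> emb r3" "c / b \<le> emb r4"
    using ab bc unfolding hsim_def by blast
  have eq1: "a / c = (a / b) * (b / c)" using h by simp
  have eq2: "c / a = (c / b) * (b / a)" using h by simp
  have p1: "0 < a / c" using h(4,5) eq1 by (metis mult_pos_pos)
  have "a / c \<le> emb r1 * emb r3" unfolding eq1
    by (rule mult_mono) (use h in auto)
  moreover have "0 < c / b" "0 < b / a" using h by (simp_all add: zero_less_divide_iff) (auto simp: zero_less_divide_iff)
  then have "c / a \<le> emb r4 * emb r2" unfolding eq2
    by (intro mult_mono) (use h in auto)
  ultimately show ?thesis unfolding hsim_def using h p1 by (auto simp: e_mult[symmetric])
qed

lemma mem_hclass: "x \<in> hclass emb a \<longleftrightarrow> hsim emb a x" unfolding hclass_def by simp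

lemma hclass_eq_iff: "a \<noteq> 0 \<Longrightarrow> hclass emb a = hclass emb b \<longleftrightarrow> hsim emb a b"
proof
  assume a: "a \<noteq> 0" and e: "hclass emb a = hclass emb b"
  have "a \<in> hclass emb a" using hsim_refl[OF a] by (simp add: mem_hclass)
  then have "a \<in> hclass emb b" using e by simp
  then have "hsim emb b a" by (simp add: mem_hclass)
  then show "hsim emb a b" by (rule hsim_sym)
next
  assume "hsim emb a b"
  then show "hclass emb a = hclass emb b" unfolding hclass_def
    by (auto intro: hsim_trans hsim_sym)
qed

lemma not_hsim_lt:
  assumes "0 < a" "a < b" "\<not> hsim emb a b" shows "emb r < b / a"
proof (rule ccontr)
  assume "\<not> emb r < b / a"
  then have b1: "b / a \<le> emb r" by simp
  have "a / b \<le> emb 1" using assms e_one by simp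
  then have "hsim emb a b" unfolding hsim_def using assms b1 by auto
  then show False using assms by blast
qed

lemma conv_pos:
  assumes a: "0 < a" "a < b" "\<not> hsim emb a b" and ax: "hsim emb a x" and by': "hsim emb b y"
  shows "x < y"
proof (rule ccontr)
  assume "\<not> x < y" then have yx: "y \<le> x" by simp
  have x0: "0 < x" using hsim_sign[OF ax] a by simp
  have y0: "0 < y" using hsim_sign[OF by'] a by simp
  obtain r1 where r1: "x / a \<le> emb r1" using ax unfolding hsim_def by blast
  obtain r2 where r2: "b / y \<le> emb r2" using by' unfolding hsim_def by blast
  have e2: "0 < emb r2" using r2 a y0 by (meson divide_pos_pos less_le_trans less_trans)
  have "b \<le> y * emb r2" using r2 y0 by (simp add: divide_le_eq mult.commute)
  also have "\<dots> \<le> x * emb r2" using yx e2 by simp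
  also have "x \<le> a * emb r1" using r1 a by (simp add: divide_le_eq mult.commute)
  then have "x * emb r2 \<le> a * emb r1 * emb r2" using e2 by simp
  finally have "b / a \<le> emb (r1 * r2)" using a by (simp add: divide_le_eq e_mult mult.commute mult.left_commute)
  then show False using not_hsim_lt[OF a, of "r1 * r2"] by simp
qed

lemma cls_le_pos: "0 < a \<Longrightarrow> 0 < b \<Longrightarrow> cls_le emb (hclass emb a) (hclass emb b) \<longleftrightarrow> hsim emb a b \<or> a < b"
proof
  assume a: "0 < a" "0 < b" and "cls_le emb (hclass emb a) (hclass emb b)"
  moreover have "a \<in> hclass emb a" "b \<in> hclass emb b" using hsim_refl[of a] hsim_refl[of b] a
    by (simp_all add: mem_hclass)
  ultimately show "hsim emb a b \<or> a < b" unfolding cls_le_def by blast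
next
  assume a: "0 < a" "0 < b" and h: "hsim emb a b \<or> a < b"
  show "cls_le emb (hclass emb a) (hclass emb b)" unfolding cls_le_def
  proof (intro ballI)
    fix x y assume "x \<in> hclass emb a" "y \<in> hclass emb b"
    then have x: "hsim emb a x" and y: "hsim emb b y" by (simp_all add: mem_hclass)
    show "hsim emb x y \<or> x < y"
    proof (cases "hsim emb a b")
      case True
      then show ?thesis using x y by (meson hsim_sym hsim_trans)
    next
      case False
      then show ?thesis using conv_pos[OF _ _ False x y] a h by blast
    qed
  qed
qed

lemma between_pos:
  assumes "0 < a" "a \<le> b" "b \<le> c" "hsim emb a c" shows "hsim emb a b"
proof -
  obtain r where r: "c / a \<le> emb r" using assms(4) unfolding hsim_def by blast
  have b0: "0 < b" using assms by simp
  have "b / a \<le> c / a" using assms by (simp add: divide_right_mono)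
  then have "b / a \<le> emb r" using r by simp
  moreover have "a / b \<le> emb 1" using assms b0 e_one by simp
  ultimately show ?thesis unfolding hsim_def using assms b0 by auto
qed

lemma cls_less_pos: "0 < a \<Longrightarrow> 0 < b \<Longrightarrow> cls_less emb (hclass emb a) (hclass emb b) \<longleftrightarrow> a < b \<and> \<not> hsim emb a b"
  unfolding cls_less_def using cls_le_pos hclass_eq_iff by force

lemma T1: assumes "0 < a" "0 < b" "0 < c" "cls_le emb (hclass emb a) (hclass emb b)"
  "cls_less emb (hclass emb b) (hclass emb c)"
  shows "cls_less emb (hclass emb a) (hclass emb c)"
proof -
  have h1: "hsim emb a b \<or> a < b" using assms cls_le_pos by blast
  have h2: "b < c" "\<not> hsim emb b c" using assms cls_less_pos by blast+
  have "a < c \<and> \<not> hsim emb a c"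
  proof (cases "hsim emb a b")
    case True
    have nac: "\<not> hsim emb a c" using True h2 by (meson hsim_sym hsim_trans)
    have "a < c"
    proof (rule ccontr)
      assume "\<not> a < c"
      then have "hsim emb b c" using between_pos[of b c a] assms h2 True hsim_sym by (meson less_le not_le)
      then show False using h2 by blast
    qed
    then show ?thesis using nac by blast
  next
    case False
    then have ab: "a < b" using h1 by blast
    have "\<not> hsim emb a c"
    proof
      assume "hsim emb a c"
      then have "hsim emb a b" using between_pos[of a b c] assms ab h2 by simp
      then show False using False by blast
    qed
    then show ?thesis using ab h2 by simp
  qed
  then show ?thesis using cls_less_pos assms by blast
qed

lemma T2: assumes "0 < a" "0 < b" "0 < c" "cls_less emb (hclass emb a) (hclass emb b)"
  "cls_le emb (hclass emb b) (hclass emb c)"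
  shows "cls_less emb (hclass emb a) (hclass emb c)"
proof -
  have h1: "a < b" "\<not> hsim emb a b" using assms cls_less_pos by blast+
  have h2: "hsim emb b c \<or> b < c" using assms cls_le_pos by blast
  have "a < c \<and> \<not> hsim emb a c"
  proof (cases "hsim emb b c")
    case True
    have nac: "\<not> hsim emb a c" using True h1 by (meson hsim_sym hsim_trans)
    have "a < c"
    proof (rule ccontr)
      assume "\<not> a < c"
      then have "c \<le> a" by simp
      then have "hsim emb c a" using between_pos[of c a b] assms h1 True hsim_sym by simp
      then show False using nac hsim_sym by blast
    qed
    then show ?thesis using nac by blast
  next
    case False
    then have bc: "b < c" using h2 by blast
    have "\<not> hsim emb a c"
    proof
      assume "hsim emb a c"
      then have "hsim emb a b" using between_pos[of a b c] assms bc h1 by simp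
      then show False using h1 by blast
    qed
    then show ?thesis using bc h1 by simp
  qed
  then show ?thesis using cls_less_pos assms by blast
qed

lemma T3: assumes "0 < a" "0 < b" "0 < c" "cls_le emb (hclass emb a) (hclass emb b)"
  "cls_le emb (hclass emb b) (hclass emb c)"
  shows "cls_le emb (hclass emb a) (hclass emb c)"
proof -
  have h1: "hsim emb a b \<or> a < b" using assms cls_le_pos by blast
  have h2: "hsim emb b c \<or> b < c" using assms cls_le_pos by blast
  have "hsim emb a c \<or> a < c"
  proof (cases "a < c")
    case True then show ?thesis by blast
  next
    case False
    then have ca: "c \<le> a" by simp
    show ?thesis
    proof (cases "hsim emb a b")
      case ab: True
      show ?thesis
      proof (cases "hsim emb b c")
        case True then show ?thesis using ab hsim_trans by blast
      next
        case False
        then have "b < c" using h2 by blast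
        then have "hsim emb b c" using between_pos[of b c a] assms ab hsim_sym ca by simp
        then show ?thesis using False by blast
      qed
    next
      case False
      then have ab: "a < b" using h1 by blast
      then have bc: "hsim emb b c" using h2 ca by auto
      then have "hsim emb c a" using between_pos[of c a b] assms ab ca hsim_sym by simp
      then show ?thesis using hsim_sym by blast
    qed
  qed
  then show ?thesis using cls_le_pos assms by blast
qed

lemma neg_less: assumes "b < 0" "0 < c" shows "cls_less emb (hclass emb b) (hclass emb c)"
proof -
  have "cls_le emb (hclass emb b) (hclass emb c)" unfolding cls_le_def
  proof (intro ballI)
    fix x y assume "x \<in> hclass emb b" "y \<in> hclass emb c"
    then have x: "hsim emb b x" and y: "hsim emb c y" by (simp_all add: mem_hclass)
    have "x \<noteq> 0" using x unfolding hsim_def by blast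
    then have "x < 0" using hsim_sign[OF x] assms(1) by auto
    moreover have "0 < y" using hsim_sign[OF y] assms(2) by auto
    ultimately
    show "hsim emb x y \<or> x < y" by simp
  qed
  moreover have "\<not> hsim emb b c" using hsim_sign assms by fastforce
  then have "hclass emb b \<noteq> hclass emb c" using hclass_eq_iff assms by simp
  ultimately show ?thesis unfolding cls_less_def by blast
qed

lemma pos_of_le: assumes "0 < a" "b \<noteq> 0" "cls_le emb (hclass emb a) (hclass emb b)" shows "0 < b"
proof -
  have "a \<in> hclass emb a" "b \<in> hclass emb b" using hsim_refl[of a] hsim_refl[OF assms(2)] assms(1)
    by (simp_all add: mem_hclass)
  then have "hsim emb a b \<or> a < b" using assms(3) unfolding cls_le_def by blast
  then show ?thesis using hsim_sign assms(1) by auto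
qed


lemma cls_le_of_le: assumes "0 < a" "a \<le> b" shows "cls_le emb (hclass emb a) (hclass emb b)"
proof -
  have "hsim emb a b \<or> a < b" using assms hsim_refl[of a] by (cases "a = b") auto
  then show ?thesis using cls_le_pos assms by simp
qed

lemma cls_le_of_add: assumes "0 < a" "1 \<le> b" "0 \<le> c" "a \<le> b + emb c"
  shows "cls_le emb (hclass emb a) (hclass emb b)"
proof (cases "a < b")
  case True then show ?thesis using cls_le_of_le assms by simp
next
  case False
  then have ba: "b \<le> a" by simp
  have b0: "0 < b" using assms by simp
  have ec: "0 \<le> emb c" using assms e_le e_zero by metis
  have "emb c \<le> b * emb c" using ec assms(2) by (simp add: mult_le_cancel_right1)
  then have "a \<le> b * (1 + emb c)" using assms(4) by (simp add: algebra_simps)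
  then have "a / b \<le> emb (1 + c)" using b0 by (simp add: divide_le_eq e_add e_one mult.commute)
  moreover have "b / a \<le> emb 1" using ba b0 e_one by simp
  ultimately have "hsim emb a b" unfolding hsim_def using assms b0 by auto
  then show ?thesis using cls_le_pos assms b0 by simp
qed

lemma seq_transfer:
  assumes pa: "\<And>m. 0 < a m" and pa': "\<And>m. 0 < a' m"
   and mono': "\<And>m m'. m \<le> m' \<Longrightarrow> cls_le emb (hclass emb (a' m)) (hclass emb (a' m'))"
   and c1: "\<And>m. cls_le emb (hclass emb (a' m)) (hclass emb (a (2*m+1)))"
   and c2: "\<And>m. cls_le emb (hclass emb (a m)) (hclass emb (a' (2*m+1)))"
   and B: "mono_cls_seq emb B"
  shows "seq_less emb (\<lambda>m. hclass emb (a m)) B \<Longrightarrow> seq_less emb (\<lambda>m. hclass emb (a' m)) B"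
    and "seq_less emb B (\<lambda>m. hclass emb (a m)) \<Longrightarrow> seq_less emb B (\<lambda>m. hclass emb (a' m))"
proof -
  have "\<forall>m. \<exists>b. b \<noteq> 0 \<and> B m = hclass emb b" using B unfolding mono_cls_seq_def hclasses_def by blast
  then obtain b where b: "\<And>m. b m \<noteq> 0" "\<And>m. B m = hclass emb (b m)" by metis
  {
    assume "seq_less emb (\<lambda>m. hclass emb (a m)) B"
    then obtain M where M: "\<And>n m. M < n \<Longrightarrow> M < m \<Longrightarrow> cls_less emb (hclass emb (a n)) (B m)"
      unfolding seq_less_def by blast
    have "cls_less emb (hclass emb (a' n)) (B m)" if "M < n" "M < m" for n m
    proof -
      have l: "cls_less emb (hclass emb (a (2*n+1))) (hclass emb (b m))" using M[of "2*n+1" m] that b by simp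
      then have "0 < b m" using pos_of_le[OF pa b(1)] unfolding cls_less_def by blast
      then show ?thesis using T1[OF pa' pa _ c1 l] b by simp
    qed
    then show "seq_less emb (\<lambda>m. hclass emb (a' m)) B" unfolding seq_less_def by blast
  }
  {
    assume "seq_less emb B (\<lambda>m. hclass emb (a m))"
    then obtain M where M: "\<And>n m. M < n \<Longrightarrow> M < m \<Longrightarrow> cls_less emb (B n) (hclass emb (a m))"
      unfolding seq_less_def by blast
    have "cls_less emb (B n) (hclass emb (a' m))" if "2*M+2 < n" "2*M+2 < m" for n m
    proof (cases "b n < 0")
      case True then show ?thesis using neg_less[OF True pa'] b by simp
    next
      case False
      then have bp: "0 < b n" using b(1)[of n] by simp
      have l: "cls_less emb (hclass emb (b n)) (hclass emb (a (M+1)))" using M[of n "M+1"] that b by simp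
      have l2: "cls_less emb (hclass emb (b n)) (hclass emb (a' (2*(M+1)+1)))"
        by (rule T2[OF bp pa pa' l c2])
      have l3: "cls_le emb (hclass emb (a' (2*(M+1)+1))) (hclass emb (a' m))" using that by (intro mono') simp
      show ?thesis using T2[OF bp pa' pa' l2 l3] b by simp
    qed
    then show "seq_less emb B (\<lambda>m. hclass emb (a' m))" unfolding seq_less_def by blast
  }
qed

lemma Rclass_eq:
  assumes pa: "\<And>m. 0 < a m" and pa': "\<And>m. 0 < a' m"
   and mono: "\<And>m m'. m \<le> m' \<Longrightarrow> cls_le emb (hclass emb (a m)) (hclass emb (a m'))"
   and mono': "\<And>m m'. m \<le> m' \<Longrightarrow> cls_le emb (hclass emb (a' m)) (hclass emb (a' m'))"
   and c1: "\<And>m. cls_le emb (hclass emb (a' m)) (hclass emb (a (2*m+1)))"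
   and c2: "\<And>m. cls_le emb (hclass emb (a m)) (hclass emb (a' (2*m+1)))"
  shows "Rclass emb (\<lambda>m. hclass emb (a m)) = Rclass emb (\<lambda>m. hclass emb (a' m))"
proof -
  have e: "seq_approx emb (\<lambda>m. hclass emb (a m)) B \<longleftrightarrow> seq_approx emb (\<lambda>m. hclass emb (a' m)) B"
    if B: "mono_cls_seq emb B" for B
  proof -
    note t1 = seq_transfer[of a a' B, OF pa pa' mono' c1 c2 B]
    note t2 = seq_transfer[of a' a B, OF pa' pa mono c2 c1 B]
    show ?thesis unfolding seq_approx_def using t1 t2 by blast
  qed
  show ?thesis unfolding Rclass_def using e by blast
qed

end


definition OS :: "(bool list \<Rightarrow> bool list option) \<Rightarrow> (bool list \<Rightarrow> bool list list) \<Rightarrow> ('a::metric_space \<Rightarrow> 'a)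
    \<Rightarrow> (bool list \<Rightarrow> 'a) \<Rightarrow> 'a \<Rightarrow> nat \<Rightarrow> real \<Rightarrow> nat set" where
  "OS U Q T I x n \<epsilon> = {length p | p. \<exists>s. U p = Some s \<and> length (Q s) = Suc n \<and>
      (\<forall>i\<le>n. dist (I (Q s ! i)) ((T ^^ i) x) < \<epsilon>)}"

lemma oc_OS: "orbit_compl U Q T I x n \<epsilon> = Inf (OS U Q T I x n \<epsilon>)"
  unfolding orbit_compl_def OS_def by simp

lemma OS_nonempty:
  assumes U: "universal_machine U" and Qd: "seq_decoder Q" and dI: "interpretation_fun I" and e: "0 < \<epsilon>"
  shows "OS U Q T I x n \<epsilon> \<noteq> {}"
proof -
  have "\<forall>i. \<exists>w. dist (I w) ((T ^^ i) x) < \<epsilon>" using dense_approx[OF dI e] by blast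
  then obtain w where w: "\<And>i. dist (I (w i)) ((T ^^ i) x) < \<epsilon>" by metis
  define W where "W = map w [0..<Suc n]"
  have "surj Q" using Qd unfolding seq_decoder_def by blast
  then obtain s0 where s0: "Q s0 = W" by (metis surjD)
  obtain p where p: "U p = Some s0" using const_prog[OF U] by blast
  have "length p \<in> OS U Q T I x n \<epsilon>" unfolding OS_def
  proof (intro CollectI exI conjI)
    show "length p = length p" by (rule refl)
    show "U p = Some s0" by (rule p)
    show "length (Q s0) = Suc n" unfolding s0 W_def by simp
    show "\<forall>i\<le>n. dist (I (Q s0 ! i)) ((T ^^ i) x) < \<epsilon>"
    proof (intro allI impI)
      fix i assume "i \<le> n"
      then have "i < length [0..<Suc n]" by simp
      then have "Q s0 ! i = w ([0..<Suc n] ! i)" unfolding s0 W_def by (rule nth_map)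
      then have "Q s0 ! i = w i" using \<open>i \<le> n\<close> by (simp del: upt_Suc)
      then show "dist (I (Q s0 ! i)) ((T ^^ i) x) < \<epsilon>" using w by simp
    qed
  qed
  then show ?thesis by blast
qed

lemma oc_mem: "OS U Q T I x n \<epsilon> \<noteq> {} \<Longrightarrow> orbit_compl U Q T I x n \<epsilon> \<in> OS U Q T I x n \<epsilon>"
  unfolding oc_OS by (rule Inf_nat_def1)

lemma oc_mono:
  assumes ne: "OS U Q T I x n \<epsilon>1 \<noteq> {}" and le: "\<epsilon>1 \<le> \<epsilon>2"
  shows "orbit_compl U Q T I x n \<epsilon>2 \<le> orbit_compl U Q T I x n \<epsilon>1"
proof -
  have "OS U Q T I x n \<epsilon>1 \<subseteq> OS U Q T I x n \<epsilon>2" unfolding OS_def using le by fastforce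
  moreover have "bdd_below (OS U Q T I x n \<epsilon>2)" by (rule bdd_belowI[of _ 0]) simp
  ultimately show ?thesis unfolding oc_OS using cInf_superset_mono[OF ne] by blast
qed

lemma oc_cross:
  fixes I J :: "bool list \<Rightarrow> 'a::metric_space"
  assumes cpt: "compact (UNIV::'a set)" and U: "universal_machine U" and Qd: "seq_decoder Q"
    and cI: "computable_interp I" and dJ: "interpretation_fun J" and eta: "\<eta> > 0"
  shows "\<exists>c. \<forall>n \<epsilon>. 0 < \<epsilon> \<longrightarrow> orbit_compl U Q T J x n (\<epsilon> + \<eta>) \<le> c + orbit_compl U Q T I x n \<epsilon>"
proof -
  have dI: "interpretation_fun I" using cI unfolding computable_interp_def by blast
  obtain c where c: "\<And>p s. U p = Some s \<Longrightarrow> (\<exists>s'. U (c @ p) = Some s' \<and> length (Q s') = length (Q s) \<and>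
     (\<forall>i<length (Q s). dist (J (Q s' ! i)) (I (Q s ! i)) < \<eta>))"
    using approx_tab[OF cpt U Qd cI dJ eta] by blast
  show ?thesis
  proof (rule exI[of _ "length c"], intro allI impI)
    fix n :: nat and \<epsilon> :: real assume e: "0 < \<epsilon>"
    have "orbit_compl U Q T I x n \<epsilon> \<in> OS U Q T I x n \<epsilon>" by (rule oc_mem[OF OS_nonempty[OF U Qd dI e]])
    then obtain p s where ps: "orbit_compl U Q T I x n \<epsilon> = length p" "U p = Some s" "length (Q s) = Suc n"
      "\<And>i. i \<le> n \<Longrightarrow> dist (I (Q s ! i)) ((T ^^ i) x) < \<epsilon>" unfolding OS_def by blast
    obtain s' where s': "U (c @ p) = Some s'" "length (Q s') = length (Q s)"
      "\<And>i. i < length (Q s) \<Longrightarrow> dist (J (Q s' ! i)) (I (Q s ! i)) < \<eta>" using c[OF ps(2)] by blast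
    have "length (c @ p) \<in> OS U Q T J x n (\<epsilon> + \<eta>)" unfolding OS_def
    proof (intro CollectI exI conjI)
      show "length (c @ p) = length (c @ p)" by (rule refl)
      show "U (c @ p) = Some s'" by (rule s'(1))
      show "length (Q s') = Suc n" using s'(2) ps(3) by simp
      show "\<forall>i\<le>n. dist (J (Q s' ! i)) ((T ^^ i) x) < \<epsilon> + \<eta>"
      proof (intro allI impI)
        fix i assume i: "i \<le> n"
        have "dist (J (Q s' ! i)) ((T ^^ i) x) \<le> dist (J (Q s' ! i)) (I (Q s ! i)) + dist (I (Q s ! i)) ((T ^^ i) x)"
          by (rule dist_triangle)
        moreover have "dist (J (Q s' ! i)) (I (Q s ! i)) < \<eta>" using s'(3) i ps(3) by simp
        moreover have "dist (I (Q s ! i)) ((T ^^ i) x) < \<epsilon>" using ps(4) i by simp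
        ultimately show "dist (J (Q s' ! i)) ((T ^^ i) x) < \<epsilon> + \<eta>" by linarith
      qed
    qed
    then have "orbit_compl U Q T J x n (\<epsilon> + \<eta>) \<le> length (c @ p)" unfolding oc_OS by (rule cInf_lower) (rule bdd_belowI[of _ 0], simp)
    then show "orbit_compl U Q T J x n (\<epsilon> + \<eta>) \<le> length c + orbit_compl U Q T I x n \<epsilon>" using ps(1) by simp
  qed
qed

lemma oc_lower:
  assumes ne: "OS U Q T I x n \<epsilon> \<noteq> {}" and K: "Suc n \<noteq> (case U [] of None \<Rightarrow> 0 | Some s \<Rightarrow> length (Q s))"
  shows "1 \<le> orbit_compl U Q T I x n \<epsilon>"
proof (rule ccontr)
  assume "\<not> 1 \<le> orbit_compl U Q T I x n \<epsilon>"
  then have z: "orbit_compl U Q T I x n \<epsilon> = 0" by simp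
  have "orbit_compl U Q T I x n \<epsilon> \<in> OS U Q T I x n \<epsilon>" by (rule oc_mem[OF ne])
  then obtain p s where "0 = length p" "U p = Some s" "length (Q s) = Suc n" unfolding OS_def z by blast
  then show False using K by simp
qed


lemma pos_gen:
  assumes hs: "hyper_structure emb hJ" and U: "universal_machine U" and Qd: "seq_decoder Q"
    and dI: "interpretation_fun I" and e: "0 < \<epsilon>"
  shows "1 \<le> hJ (\<lambda>n. real (orbit_compl U Q T I x n \<epsilon>))"
proof -
  define K0 where "K0 = (case U [] of None \<Rightarrow> 0 | Some s \<Rightarrow> length (Q s))"
  have "emb 1 \<le> hJ (\<lambda>n. real (orbit_compl U Q T I x n \<epsilon>))"
  proof (rule j_k[OF hs], rule exI[of _ "Suc K0"], intro conjI allI impI)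
    show "1 \<le> Suc K0" by simp
    fix n :: nat assume n: "1 \<le> n"
    have "Suc K0 * 1 \<le> Suc K0 * n" using n by (rule mult_le_mono2)
    then have "Suc (Suc K0 * n) \<noteq> K0" by simp
    then have "1 \<le> orbit_compl U Q T I x (Suc K0 * n) \<epsilon>"
      by (intro oc_lower[OF OS_nonempty[OF U Qd dI e]]) (simp add: K0_def)
    then show "1 \<le> real (orbit_compl U Q T I x (Suc K0 * n) \<epsilon>)" by simp
  qed
  then show ?thesis using e_one[OF hs] by simp
qed

lemma mono_gen:
  assumes hs: "hyper_structure emb hJ" and U: "universal_machine U" and Qd: "seq_decoder Q"
    and dI: "interpretation_fun I" and mm: "m \<le> m'"
  shows "cls_le emb (hclass emb (hJ (\<lambda>n. real (orbit_compl U Q T I x n (1 / real (Suc m))))))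
                    (hclass emb (hJ (\<lambda>n. real (orbit_compl U Q T I x n (1 / real (Suc m'))))))"
proof (rule cls_le_of_le[OF hs])
  have e: "0 < 1 / real (Suc m)" by simp
  show "0 < hJ (\<lambda>n. real (orbit_compl U Q T I x n (1 / real (Suc m))))"
    by (rule less_le_trans[OF zero_less_one pos_gen[OF hs U Qd dI e]])
  have le: "1 / real (Suc m') \<le> 1 / real (Suc m)" by (rule divide_left_mono) (use mm in auto)
  have e': "0 < 1 / real (Suc m')" by simp
  show "hJ (\<lambda>n. real (orbit_compl U Q T I x n (1 / real (Suc m)))) \<le>
        hJ (\<lambda>n. real (orbit_compl U Q T I x n (1 / real (Suc m'))))"
  proof (rule j_mono_k[OF hs], rule exI[of _ 1], intro conjI allI impI)
    fix n :: nat
    show "real (orbit_compl U Q T I x (1 * n) (1 / real (Suc m))) \<le> real (orbit_compl U Q T I x (1 * n) (1 / real (Suc m')))"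
      using oc_mono[OF OS_nonempty[OF U Qd dI e'] le] by simp
  qed simp
qed

lemma cross_gen:
  fixes I J :: "bool list \<Rightarrow> 'a::metric_space"
  assumes hs: "hyper_structure emb hJ" and cpt: "compact (UNIV::'a set)" and U: "universal_machine U"
    and Qd: "seq_decoder Q" and cI: "computable_interp I" and cJ: "computable_interp J"
  shows "cls_le emb (hclass emb (hJ (\<lambda>n. real (orbit_compl U Q T J x n (1 / real (Suc m))))))
                    (hclass emb (hJ (\<lambda>n. real (orbit_compl U Q T I x n (1 / real (Suc (2 * m + 1)))))))"
proof -
  have dI: "interpretation_fun I" using cI unfolding computable_interp_def by blast
  have dJ: "interpretation_fun J" using cJ unfolding computable_interp_def by blast
  define \<eta> where "\<eta> = 1 / real (Suc (2 * m + 1))"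
  have eta: "0 < \<eta>" unfolding \<eta>_def by simp
  obtain c where c: "\<And>n \<epsilon>. 0 < \<epsilon> \<Longrightarrow> orbit_compl U Q T J x n (\<epsilon> + \<eta>) \<le> c + orbit_compl U Q T I x n \<epsilon>"
    using oc_cross[OF cpt U Qd cI dJ eta] by blast
  have ee: "\<eta> + \<eta> = 1 / real (Suc m)" unfolding \<eta>_def by (simp add: field_simps)
  have pt: "\<forall>n. real (orbit_compl U Q T J x n (1 / real (Suc m))) \<le>
      real (orbit_compl U Q T I x n \<eta>) + real c"
  proof
    fix n show "real (orbit_compl U Q T J x n (1 / real (Suc m))) \<le> real (orbit_compl U Q T I x n \<eta>) + real c"
      using c[OF eta, of n] unfolding ee by simp
  qed
  have "hJ (\<lambda>n. real (orbit_compl U Q T J x n (1 / real (Suc m)))) \<le>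
        hJ (\<lambda>n. real (orbit_compl U Q T I x n \<eta>) + real c)"
    by (rule j_mono_k[OF hs], rule exI[of _ 1]) (use pt in simp)
  also have "\<dots> = hJ (\<lambda>n. real (orbit_compl U Q T I x n \<eta>)) + emb (real c)" by (rule j_add_const[OF hs])
  finally have le: "hJ (\<lambda>n. real (orbit_compl U Q T J x n (1 / real (Suc m)))) \<le>
        hJ (\<lambda>n. real (orbit_compl U Q T I x n \<eta>)) + emb (real c)" .
  have e1: "0 < 1 / real (Suc m)" by simp
  have p1: "1 \<le> hJ (\<lambda>n. real (orbit_compl U Q T J x n (1 / real (Suc m))))" by (rule pos_gen[OF hs U Qd dJ e1])
  have p2: "1 \<le> hJ (\<lambda>n. real (orbit_compl U Q T I x n \<eta>))" by (rule pos_gen[OF hs U Qd dI eta])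
  show ?thesis unfolding \<eta>_def[symmetric]
    by (rule cls_le_of_add[OF hs _ p2 _ le]) (use p1 in simp_all)
qed

theorem mainTheorem7:
  fixes T :: "'a::metric_space \<Rightarrow> 'a"
    and I J :: "bool list \<Rightarrow> 'a"
    and U :: "bool list \<Rightarrow> bool list option"
    and Q :: "bool list \<Rightarrow> bool list list"
    and emb :: "real \<Rightarrow> 'h::linordered_field"
    and hJ :: "(nat \<Rightarrow> real) \<Rightarrow> 'h"
  assumes "compact (UNIV :: 'a set)"
    and "universal_machine U"
    and "seq_decoder Q"
    and "hyper_structure emb hJ"
    and "computable_interp I"
    and "computable_interp J"
  shows "\<forall>x. E_orbit emb hJ U Q T I x = E_orbit emb hJ U Q T J x"
proof
  fix x
  note cpt = assms(1) and U = assms(2) and Qd = assms(3) and hs = assms(4) and cI = assms(5) and cJ = assms(6)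
  have dI: "interpretation_fun I" using cI unfolding computable_interp_def by blast
  have dJ: "interpretation_fun J" using cJ unfolding computable_interp_def by blast
  define a where "a m = hJ (\<lambda>n. real (orbit_compl U Q T I x n (1 / real (Suc m))))" for m
  define a' where "a' m = hJ (\<lambda>n. real (orbit_compl U Q T J x n (1 / real (Suc m))))" for m
  have e: "0 < 1 / real (Suc m)" for m by simp
  have pa: "0 < a m" for m unfolding a_def by (rule less_le_trans[OF zero_less_one pos_gen[OF hs U Qd dI e[of m]]])
  have pa': "0 < a' m" for m unfolding a'_def by (rule less_le_trans[OF zero_less_one pos_gen[OF hs U Qd dJ e[of m]]])
  have mono: "cls_le emb (hclass emb (a m)) (hclass emb (a m'))" if "m \<le> m'" for m m'
    unfolding a_def by (rule mono_gen[OF hs U Qd dI that])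
  have mono': "cls_le emb (hclass emb (a' m)) (hclass emb (a' m'))" if "m \<le> m'" for m m'
    unfolding a'_def by (rule mono_gen[OF hs U Qd dJ that])
  have c1: "cls_le emb (hclass emb (a' m)) (hclass emb (a (2 * m + 1)))" for m
    unfolding a_def a'_def by (rule cross_gen[OF hs cpt U Qd cI cJ])
  have c2: "cls_le emb (hclass emb (a m)) (hclass emb (a' (2 * m + 1)))" for m
    unfolding a_def a'_def by (rule cross_gen[OF hs cpt U Qd cJ cI])
  have "Rclass emb (\<lambda>m. hclass emb (a m)) = Rclass emb (\<lambda>m. hclass emb (a' m))"
    by (rule Rclass_eq[of emb hJ a a', OF hs pa pa' mono mono' c1 c2])
  then show "E_orbit emb hJ U Q T I x = E_orbit emb hJ U Q T J x"
    unfolding E_orbit_def E_eps_def a_def a'_def .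
qed


end
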